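(* Let $0\le c<1$. For the best-worst rule $s=(c,4)$ there is a unique non-convergent Nash equilibrium (up to relabelling of candidates), namely $x=((x^1,2),(1-x^1,2))$ with $x^1=\frac{1}{4}(1+c)$. For the rule $s=(c,5)$ there is a unique non-convergent Nash equilibrium (up to relabelling of candidates), namely $x=((x^1,2),(1/2,1),(1-x^1,2))$ with $x^1=\frac16(1+2c)$.
   Context: Setting: voters' ideal points are distributed uniformly (unit mass, Lebesgue measure) on $[0,1]$. There are $m$ candidates; a profile is $x=(x_1,\dots,x_m)\in[0,1]^m$. A voter with ideal point $y$ ranks candidates by distance $|x_i-y|$ (closer is better); ties are broken by a fair lottery (uniformly random strict order among tied candidates). Under the best-worst rule $s=(c,m)$ ($c\ge0$), a candidate receives $1$ point from each voter ranking her first, $-c$ from each voter ranking her last ($m$-th), and $0$ otherwise; $v_i(x)$ is candidate $i$'s expected total points. A (pure-strategy Nash) equilibrium is a profile $x^*$ with $v_i(x^* )\ge v_i(t,x^*_{-i})$ for all $i$ and $t\in[0,1]$ ($(t,x_{-i})$ is $x$ with $x_i$ replaced by $t$); it is non-convergent (NCNE) if at least two platforms are distinct. Notation $x=((x^1,n_1),\dots,(x^q,n_q))$ lists the distinct occupied positions $x^1<\dots<x^q$ with $n_j$ candidates at $x^j$. *)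

theory Defs
  imports "HOL-Analysis.Analysis"
begin

text \<open>Candidates are indexed by 0..m-1; a profile is a function x :: nat => real,
  only the values x i for i < m matter. Voters are uniform on [0,1].\<close>

text \<open>Probability that a voter at y ranks candidate i first (fair lottery among
  the candidates at minimal distance).\<close>
definition first_share :: "nat \<Rightarrow> (nat \<Rightarrow> real) \<Rightarrow> nat \<Rightarrow> real \<Rightarrow> real" where
  "first_share m x i y =
     (let d = Min ((\<lambda>j. \<bar>x j - y\<bar>) ` {..<m});
          T = {j. j < m \<and> \<bar>x j - y\<bar> = d}
      in if i \<in> T then 1 / real (card T) else 0)"

definition last_share :: "nat \<Rightarrow> (nat \<Rightarrow> real) \<Rightarrow> nat \<Rightarrow> real \<Rightarrow> real" where
  "last_share m x i y =
     (let d = Max ((\<lambda>j. \<bar>x j - y\<bar>) ` {..<m});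
          T = {j. j < m \<and> \<bar>x j - y\<bar> = d}
      in if i \<in> T then 1 / real (card T) else 0)"

definition bw_score :: "real \<Rightarrow> nat \<Rightarrow> (nat \<Rightarrow> real) \<Rightarrow> nat \<Rightarrow> real" where
  "bw_score c m x i =
     integral {0..1} (\<lambda>y. first_share m x i y - c * last_share m x i y)"

definition is_profile :: "nat \<Rightarrow> (nat \<Rightarrow> real) \<Rightarrow> bool" where
  "is_profile m x \<longleftrightarrow> (\<forall>i<m. x i \<in> {0..1})"

definition is_equilibrium :: "real \<Rightarrow> nat \<Rightarrow> (nat \<Rightarrow> real) \<Rightarrow> bool" where
  "is_equilibrium c m x \<longleftrightarrow> is_profile m x \<and>
     (\<forall>i<m. \<forall>t\<in>{0..1}. bw_score c m (x(i := t)) i \<le> bw_score c m x i)"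

definition is_NCNE :: "real \<Rightarrow> nat \<Rightarrow> (nat \<Rightarrow> real) \<Rightarrow> bool" where
  "is_NCNE c m x \<longleftrightarrow> is_equilibrium c m x \<and> (\<exists>i<m. \<exists>j<m. x i \<noteq> x j)"

end

theory Submission
  imports Defs
begin


lemma reflect_int:
  fixes f :: "real \<Rightarrow> real"
  shows "integral {0..1} (\<lambda>y. f (1 - y)) = integral {0..1} f"
proof -
  have "integral {0..1} (\<lambda>y. f (1 - y)) = integral {0..1} ((\<lambda>z. f (-z)) \<circ> ((+) (-1)))"
    by (simp add: o_def)
  also have "\<dots> = integral {-1..0} (\<lambda>z. f (-z))"
    by (subst integral_shift_Icc_real) simp
  also have "\<dots> = integral {0..1} f"
    using Henstock_Kurzweil_Integration.integral_reflect_real[where a=0 and b=1 and f=f] by simp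
  finally show ?thesis .
qed

lemma first_share_alt:
  assumes "i < m"
  shows "first_share m x i y = (if \<forall>j<m. \<bar>x i - y\<bar> \<le> \<bar>x j - y\<bar>
     then 1 / real (card {j. j < m \<and> (\<forall>l<m. \<bar>x j - y\<bar> \<le> \<bar>x l - y\<bar>)}) else 0)"
proof -
  let ?S = "(\<lambda>j. \<bar>x j - y\<bar>) ` {..<m}"
  have fin: "finite ?S" and ne: "?S \<noteq> {}" using assms by auto
  have key: "\<bar>x j - y\<bar> = Min ?S \<longleftrightarrow> (\<forall>l<m. \<bar>x j - y\<bar> \<le> \<bar>x l - y\<bar>)" if "j < m" for j
  proof
    assume "\<bar>x j - y\<bar> = Min ?S" then show "\<forall>l<m. \<bar>x j - y\<bar> \<le> \<bar>x l - y\<bar>"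
      using fin by auto
  next
    assume h: "\<forall>l<m. \<bar>x j - y\<bar> \<le> \<bar>x l - y\<bar>"
    show "\<bar>x j - y\<bar> = Min ?S"
      by (rule Min_eqI[symmetric]) (use fin h that in auto)
  qed
  have T: "{j. j < m \<and> \<bar>x j - y\<bar> = Min ?S} = {j. j < m \<and> (\<forall>l<m. \<bar>x j - y\<bar> \<le> \<bar>x l - y\<bar>)}"
    using key by blast
  show ?thesis unfolding first_share_def Let_def T using assms by auto
qed

lemma last_share_alt:
  assumes "i < m"
  shows "last_share m x i y = (if \<forall>j<m. \<bar>x j - y\<bar> \<le> \<bar>x i - y\<bar>
     then 1 / real (card {j. j < m \<and> (\<forall>l<m. \<bar>x l - y\<bar> \<le> \<bar>x j - y\<bar>)}) else 0)"
proof -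
  let ?S = "(\<lambda>j. \<bar>x j - y\<bar>) ` {..<m}"
  have fin: "finite ?S" and ne: "?S \<noteq> {}" using assms by auto
  have key: "\<bar>x j - y\<bar> = Max ?S \<longleftrightarrow> (\<forall>l<m. \<bar>x l - y\<bar> \<le> \<bar>x j - y\<bar>)" if "j < m" for j
  proof
    assume "\<bar>x j - y\<bar> = Max ?S" then show "\<forall>l<m. \<bar>x l - y\<bar> \<le> \<bar>x j - y\<bar>"
      using fin by auto
  next
    assume h: "\<forall>l<m. \<bar>x l - y\<bar> \<le> \<bar>x j - y\<bar>"
    show "\<bar>x j - y\<bar> = Max ?S"
      by (rule Max_eqI[symmetric]) (use fin h that in auto)
  qed
  have T: "{j. j < m \<and> \<bar>x j - y\<bar> = Max ?S} = {j. j < m \<and> (\<forall>l<m. \<bar>x l - y\<bar> \<le> \<bar>x j - y\<bar>)}"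
    using key by blast
  show ?thesis unfolding last_share_def Let_def T using assms by auto
qed

lemma step_int:
  fixes L R v :: real
  assumes "0 \<le> L" "L \<le> R" "R \<le> 1"
  shows "((\<lambda>y. if y \<in> {L..R} then v else 0) has_integral (R - L) * v) {0..1}"
proof -
  have "((\<lambda>y. v) has_integral (R - L) * v) {L..R}"
    using has_integral_const_real[of v L R] assms by simp
  then have "((\<lambda>y. if y \<in> cbox L R then v else 0) has_integral (R - L) * v) (cbox 0 1)"
    by (intro has_integral_restrict_closed_subinterval) (use assms in auto)
  then show ?thesis by simp
qed

lemma first_hasint:
  assumes i: "i < m" and L0: "0 \<le> L" and Lx: "L \<le> x i" and xR: "x i \<le> R" and R1: "R \<le> 1"
    and hl: "\<forall>j<m. x j < x i \<longrightarrow> x i + x j \<le> 2*L"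
    and hl2: "L = 0 \<or> (\<exists>j<m. x j < x i \<and> x i + x j = 2*L)"
    and hr: "\<forall>j<m. x i < x j \<longrightarrow> 2*R \<le> x i + x j"
    and hr2: "R = 1 \<or> (\<exists>j<m. x i < x j \<and> x i + x j = 2*R)"
  shows "(first_share m x i has_integral (R - L) / real (card {j. j < m \<and> x j = x i})) {0..1}"
proof -
  let ?n = "real (card {j. j < m \<and> x j = x i})"
  have g: "((\<lambda>y. if y \<in> {L..R} then 1 / ?n else 0) has_integral (R - L) / ?n) {0..1}"
    using step_int[OF L0 order_trans[OF Lx xR] R1, of "1 / ?n"] by simp
  show ?thesis
  proof (rule has_integral_spike_finite[OF _ _ g])
    show "finite {L, R}" by simp
    fix y assume y: "y \<in> {0..1} - {L, R}"
    show "first_share m x i y = (if y \<in> {L..R} then 1 / ?n else 0)"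
    proof (cases "L < y \<and> y < R")
      case True
      have strict: "\<bar>x i - y\<bar> < \<bar>x j - y\<bar>" if "j < m" "x j \<noteq> x i" for j
      proof (cases "x j < x i")
        case True
        then have "x i + x j \<le> 2 * L" using hl that by auto
        then show ?thesis using True \<open>L < y \<and> y < R\<close> by (auto simp: abs_if)
      next
        case False
        then have "x i < x j" using that by auto
        then have "2 * R \<le> x i + x j" using hr that by auto
        then show ?thesis using \<open>x i < x j\<close> \<open>L < y \<and> y < R\<close> by (auto simp: abs_if)
      qed
      have all: "\<forall>j<m. \<bar>x i - y\<bar> \<le> \<bar>x j - y\<bar>"
        using strict by (metis less_eq_real_def)
      have set: "{j. j < m \<and> (\<forall>l<m. \<bar>x j - y\<bar> \<le> \<bar>x l - y\<bar>)} = {j. j < m \<and> x j = x i}"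
      proof (intro set_eqI iffI)
        fix j assume "j \<in> {j. j < m \<and> (\<forall>l<m. \<bar>x j - y\<bar> \<le> \<bar>x l - y\<bar>)}"
        then show "j \<in> {j. j < m \<and> x j = x i}" using strict[of j] i by force
      next
        fix j assume "j \<in> {j. j < m \<and> x j = x i}"
        then show "j \<in> {j. j < m \<and> (\<forall>l<m. \<bar>x j - y\<bar> \<le> \<bar>x l - y\<bar>)}" using all by auto
      qed
      show ?thesis unfolding first_share_alt[OF i] using all set True by auto
    next
      case False
      then have out: "y < L \<or> R < y" using y by auto
      have "\<exists>j<m. \<bar>x j - y\<bar> < \<bar>x i - y\<bar>"
      proof (cases "y < L")
        case True
        with hl2 y obtain j where "j < m" "x j < x i" "x i + x j = 2 * L" by auto
        then show ?thesis using True by (intro exI[of _ j]) (auto simp: abs_if)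
      next
        case False
        then have "R < y" using out by auto
        with hr2 y obtain j where "j < m" "x i < x j" "x i + x j = 2 * R" by auto
        then show ?thesis using \<open>R < y\<close> by (intro exI[of _ j]) (auto simp: abs_if)
      qed
      then have "\<not> (\<forall>j<m. \<bar>x i - y\<bar> \<le> \<bar>x j - y\<bar>)" by force
      then show ?thesis unfolding first_share_alt[OF i] using out by auto
    qed
  qed
qed

lemma last_hasint:
  assumes i: "i < m" and rng: "\<forall>j<m. A \<le> x j \<and> x j \<le> B"
    and eA: "\<exists>j<m. x j = A" and eB: "\<exists>j<m. x j = B" and AB: "A < B"
    and s0: "0 \<le> A + B" and s2: "A + B \<le> 2"
  shows "(last_share m x i has_integral
     (if x i = A then (1 - (A + B) / 2) / real (card {j. j < m \<and> x j = A})
      else if x i = B then ((A + B) / 2) / real (card {j. j < m \<and> x j = B}) else 0)) {0..1}"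
proof -
  define M where "M = (A + B) / 2"
  define \<alpha> where "\<alpha> = (if x i = A then 1 / real (card {j. j < m \<and> x j = A}) else 0)"
  define \<beta> where "\<beta> = (if x i = B then 1 / real (card {j. j < m \<and> x j = B}) else 0)"
  have g1: "((\<lambda>y. if y \<in> {0..M} then \<beta> else 0) has_integral (M - 0) * \<beta>) {0..1}"
    by (rule step_int) (use s0 s2 in \<open>auto simp: M_def\<close>)
  have g2: "((\<lambda>y. if y \<in> {M..1} then \<alpha> else 0) has_integral (1 - M) * \<alpha>) {0..1}"
    by (rule step_int) (use s0 s2 in \<open>auto simp: M_def\<close>)
  have g: "((\<lambda>y. (if y \<in> {0..M} then \<beta> else 0) + (if y \<in> {M..1} then \<alpha> else 0)) has_integral
      (M - 0) * \<beta> + (1 - M) * \<alpha>) {0..1}"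
    using has_integral_add[OF g1 g2] by simp
  have val: "(M - 0) * \<beta> + (1 - M) * \<alpha> =
     (if x i = A then (1 - (A + B) / 2) / real (card {j. j < m \<and> x j = A})
      else if x i = B then ((A + B) / 2) / real (card {j. j < m \<and> x j = B}) else 0)"
    using AB by (auto simp: \<alpha>_def \<beta>_def M_def divide_simps)
  show ?thesis unfolding val[symmetric]
  proof (rule has_integral_spike_finite[OF _ _ g])
    show "finite {M}" by simp
    fix y assume y: "y \<in> {0..1} - {M}"
    show "last_share m x i y = (if y \<in> {0..M} then \<beta> else 0) + (if y \<in> {M..1} then \<alpha> else 0)"
    proof (cases "y < M")
      case True
      have far: "\<bar>x l - y\<bar> < \<bar>B - y\<bar>" if "l < m" "x l \<noteq> B" for l
        using rng that True AB by (force simp: abs_if M_def)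
      have farle: "\<bar>x l - y\<bar> \<le> \<bar>B - y\<bar>" if "l < m" for l
        using far[OF that] by (cases "x l = B") auto
      obtain jB where jB: "jB < m" "x jB = B" using eB by auto
      have set: "{j. j < m \<and> (\<forall>l<m. \<bar>x l - y\<bar> \<le> \<bar>x j - y\<bar>)} = {j. j < m \<and> x j = B}"
      proof (intro set_eqI iffI)
        fix j assume "j \<in> {j. j < m \<and> (\<forall>l<m. \<bar>x l - y\<bar> \<le> \<bar>x j - y\<bar>)}"
        then show "j \<in> {j. j < m \<and> x j = B}" using far[of j] jB by force
      next
        fix j assume "j \<in> {j. j < m \<and> x j = B}"
        then show "j \<in> {j. j < m \<and> (\<forall>l<m. \<bar>x l - y\<bar> \<le> \<bar>x j - y\<bar>)}" using farle by auto
      qed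
      have "(\<forall>j<m. \<bar>x j - y\<bar> \<le> \<bar>x i - y\<bar>) \<longleftrightarrow> x i = B"
        using farle far[OF i] jB by force
      then show ?thesis unfolding last_share_alt[OF i] set using True y
        by (auto simp: \<beta>_def)
    next
      case False
      then have T: "M < y" using y by auto
      have far: "\<bar>x l - y\<bar> < \<bar>A - y\<bar>" if "l < m" "x l \<noteq> A" for l
        using rng that T AB by (force simp: abs_if M_def)
      have farle: "\<bar>x l - y\<bar> \<le> \<bar>A - y\<bar>" if "l < m" for l
        using far[OF that] by (cases "x l = A") auto
      obtain jA where jA: "jA < m" "x jA = A" using eA by auto
      have set: "{j. j < m \<and> (\<forall>l<m. \<bar>x l - y\<bar> \<le> \<bar>x j - y\<bar>)} = {j. j < m \<and> x j = A}"
      proof (intro set_eqI iffI)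
        fix j assume "j \<in> {j. j < m \<and> (\<forall>l<m. \<bar>x l - y\<bar> \<le> \<bar>x j - y\<bar>)}"
        then show "j \<in> {j. j < m \<and> x j = A}" using far[of j] jA by force
      next
        fix j assume "j \<in> {j. j < m \<and> x j = A}"
        then show "j \<in> {j. j < m \<and> (\<forall>l<m. \<bar>x l - y\<bar> \<le> \<bar>x j - y\<bar>)}" using farle by auto
      qed
      have "(\<forall>j<m. \<bar>x j - y\<bar> \<le> \<bar>x i - y\<bar>) \<longleftrightarrow> x i = A"
        using farle far[OF i] jA by force
      then show ?thesis unfolding last_share_alt[OF i] set using T y
        by (auto simp: \<alpha>_def)
    qed
  qed
qed

lemma score_formula:
  assumes i: "i < m" and L0: "0 \<le> L" and Lx: "L \<le> x i" and xR: "x i \<le> R" and R1: "R \<le> 1"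
    and hl: "\<forall>j<m. x j < x i \<longrightarrow> x i + x j \<le> 2*L"
    and hl2: "L = 0 \<or> (\<exists>j<m. x j < x i \<and> x i + x j = 2*L)"
    and hr: "\<forall>j<m. x i < x j \<longrightarrow> 2*R \<le> x i + x j"
    and hr2: "R = 1 \<or> (\<exists>j<m. x i < x j \<and> x i + x j = 2*R)"
    and rng: "\<forall>j<m. A \<le> x j \<and> x j \<le> B"
    and eA: "\<exists>j<m. x j = A" and eB: "\<exists>j<m. x j = B" and AB: "A < B"
    and s0: "0 \<le> A + B" and s2: "A + B \<le> 2"
  shows "bw_score c m x i = (R - L) / real (card {j. j < m \<and> x j = x i}) - c *
     (if x i = A then (1 - (A + B) / 2) / real (card {j. j < m \<and> x j = A})
      else if x i = B then ((A + B) / 2) / real (card {j. j < m \<and> x j = B}) else 0)"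
  unfolding bw_score_def
  by (rule integral_unique, rule has_integral_diff, rule first_hasint[OF assms(1-9)],
      rule has_integral_mult_right, rule last_hasint[OF i rng eA eB AB s0 s2])

lemma aux: "(a::real) / n - c * (b / n) = (a - c * b) / n"
  by (simp add: diff_divide_distrib)

lemma card_upd:
  fixes i m :: nat and x :: "nat \<Rightarrow> real"
  assumes "i < m" "x i \<noteq> v"
  shows "card {j. j < m \<and> (x(i := v)) j = v} = card {j. j < m \<and> x j = v} + 1"
proof -
  have "{j. j < m \<and> (x(i := v)) j = v} = insert i {j. j < m \<and> x j = v}"
    using assms by auto
  moreover have "finite {j. j < m \<and> x j = v}" by (simp add: finite_Collect_conjI)
  ultimately show ?thesis using assms by simp
qed

lemma card_upd0:
  fixes i m :: nat and x :: "nat \<Rightarrow> real"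
  assumes "i < m" "\<forall>j<m. x j \<noteq> v"
  shows "card {j. j < m \<and> (x(i := v)) j = v} = 1"
proof -
  have "{j. j < m \<and> x j = v} = {}" using assms by auto
  then have "card {j. j < m \<and> x j = v} = 0" by (simp only: card.empty)
  then show ?thesis using card_upd[of i m x v] assms by auto
qed

lemma card_others:
  fixes i m :: nat and x :: "nat \<Rightarrow> real"
  assumes "i < m"
  shows "card {j. j < m \<and> (x(i := t)) j = t} = card {j. j < m \<and> j \<noteq> i \<and> x j = t} + 1"
proof -
  have "{j. j < m \<and> (x(i := t)) j = t} = insert i {j. j < m \<and> j \<noteq> i \<and> x j = t}"
    using assms by auto
  moreover have "finite {j. j < m \<and> j \<noteq> i \<and> x j = t}" by (simp add: finite_Collect_conjI)
  ultimately show ?thesis by simp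
qed

lemma dev_score:
  fixes i m :: nat and x :: "nat \<Rightarrow> real"
  assumes i: "i < m" and L0: "0 \<le> L" and Lx: "L \<le> t" and xR: "t \<le> R" and R1: "R \<le> 1"
    and hl: "\<forall>j<m. j \<noteq> i \<longrightarrow> x j < t \<longrightarrow> t + x j \<le> 2*L"
    and hl2: "L = 0 \<or> (\<exists>j<m. j \<noteq> i \<and> x j < t \<and> t + x j = 2*L)"
    and hr: "\<forall>j<m. j \<noteq> i \<longrightarrow> t < x j \<longrightarrow> 2*R \<le> t + x j"
    and hr2: "R = 1 \<or> (\<exists>j<m. j \<noteq> i \<and> t < x j \<and> t + x j = 2*R)"
    and rng: "\<forall>j<m. j \<noteq> i \<longrightarrow> A \<le> x j \<and> x j \<le> B" and rngt: "A \<le> t" "t \<le> B"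
    and eA: "A = t \<or> (\<exists>j<m. j \<noteq> i \<and> x j = A)" and eB: "B = t \<or> (\<exists>j<m. j \<noteq> i \<and> x j = B)"
    and AB: "A < B" and s0: "0 \<le> A + B" and s2: "A + B \<le> 2"
  shows "bw_score c m (x(i := t)) i = (R - L) / real (card {j. j < m \<and> j \<noteq> i \<and> x j = t} + 1) - c *
     (if t = A then (1 - (A + B) / 2) / real (card {j. j < m \<and> j \<noteq> i \<and> x j = A} + 1)
      else if t = B then ((A + B) / 2) / real (card {j. j < m \<and> j \<noteq> i \<and> x j = B} + 1) else 0)"
proof -
  have "bw_score c m (x(i := t)) i = (R - L) / real (card {j. j < m \<and> (x(i := t)) j = (x(i := t)) i}) - c *
     (if (x(i := t)) i = A then (1 - (A + B) / 2) / real (card {j. j < m \<and> (x(i := t)) j = A})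
      else if (x(i := t)) i = B then ((A + B) / 2) / real (card {j. j < m \<and> (x(i := t)) j = B}) else 0)"
  proof (rule score_formula[OF i])
    show "L = 0 \<or> (\<exists>j<m. (x(i := t)) j < (x(i := t)) i \<and> (x(i := t)) i + (x(i := t)) j = 2 * L)"
      using hl2 by (metis fun_upd_other fun_upd_same)
    show "R = 1 \<or> (\<exists>j<m. (x(i := t)) i < (x(i := t)) j \<and> (x(i := t)) i + (x(i := t)) j = 2 * R)"
      using hr2 by (metis fun_upd_other fun_upd_same)
    show "\<exists>j<m. (x(i := t)) j = A" using eA i by (metis fun_upd_other fun_upd_same)
    show "\<exists>j<m. (x(i := t)) j = B" using eB i by (metis fun_upd_other fun_upd_same)
    show "\<forall>j<m. (x(i := t)) j < (x(i := t)) i \<longrightarrow> (x(i := t)) i + (x(i := t)) j \<le> 2 * L"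
      using hl by auto
    show "\<forall>j<m. (x(i := t)) i < (x(i := t)) j \<longrightarrow> 2 * R \<le> (x(i := t)) i + (x(i := t)) j"
      using hr by auto
    show "\<forall>j<m. A \<le> (x(i := t)) j \<and> (x(i := t)) j \<le> B"
      using rng rngt by auto
  qed (use assms in auto)
  then show ?thesis using i card_others[OF i, of x t]
    by (cases "t = A"; cases "t = B") (simp_all add: fun_upd_same del: fun_upd_apply)
qed

lemma card_zero_others:
  fixes i m :: nat and x :: "nat \<Rightarrow> real"
  assumes "\<forall>j<m. j \<noteq> i \<longrightarrow> x j \<noteq> v"
  shows "card {j. j < m \<and> j \<noteq> i \<and> x j = v} = 0"
proof -
  have "{j. j < m \<and> j \<noteq> i \<and> x j = v} = {}" using assms by auto
  then show ?thesis by (simp only: card.empty)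
qed

lemma card_self:
  fixes i m :: nat and x :: "nat \<Rightarrow> real"
  assumes "i < m"
  shows "card {j. j < m \<and> x j = x i} = card {j. j < m \<and> j \<noteq> i \<and> x j = x i} + 1"
  using card_others[OF assms, of x "x i"] by simp

lemma card_notself:
  fixes i m :: nat and x :: "nat \<Rightarrow> real"
  assumes "x i \<noteq> v"
  shows "card {j. j < m \<and> j \<noteq> i \<and> x j = v} = card {j. j < m \<and> x j = v}"
proof -
  have "{j. j < m \<and> j \<noteq> i \<and> x j = v} = {j. j < m \<and> x j = v}" using assms by auto
  then show ?thesis by simp
qed

lemma dev_score2:
  fixes i m :: nat and x :: "nat \<Rightarrow> real"
  assumes i: "i < m"
    and occ: "\<forall>j<m. j \<noteq> i \<longrightarrow> x j \<in> S" and att: "\<forall>v\<in>S. \<exists>j<m. j \<noteq> i \<and> x j = v"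
    and L0: "0 \<le> L" and Lx: "L \<le> t" and xR: "t \<le> R" and R1: "R \<le> 1"
    and hl: "\<forall>v\<in>S. v < t \<longrightarrow> t + v \<le> 2*L"
    and hl2: "L = 0 \<or> (\<exists>v\<in>S. v < t \<and> t + v = 2*L)"
    and hr: "\<forall>v\<in>S. t < v \<longrightarrow> 2*R \<le> t + v"
    and hr2: "R = 1 \<or> (\<exists>v\<in>S. t < v \<and> t + v = 2*R)"
    and rng: "\<forall>v\<in>S. A \<le> v \<and> v \<le> B" and rngt: "A \<le> t" "t \<le> B"
    and eA: "A = t \<or> A \<in> S" and eB: "B = t \<or> B \<in> S"
    and AB: "A < B" and s0: "0 \<le> A + B" and s2: "A + B \<le> 2"
  shows "bw_score c m (x(i := t)) i = (R - L) / real (card {j. j < m \<and> j \<noteq> i \<and> x j = t} + 1) - c *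
     (if t = A then (1 - (A + B) / 2) / real (card {j. j < m \<and> j \<noteq> i \<and> x j = A} + 1)
      else if t = B then ((A + B) / 2) / real (card {j. j < m \<and> j \<noteq> i \<and> x j = B} + 1) else 0)"
proof (rule dev_score[OF i L0 Lx xR R1 _ _ _ _ _ rngt _ _ AB s0 s2])
  show "\<forall>j<m. j \<noteq> i \<longrightarrow> x j < t \<longrightarrow> t + x j \<le> 2 * L" using occ hl by blast
  show "\<forall>j<m. j \<noteq> i \<longrightarrow> t < x j \<longrightarrow> 2 * R \<le> t + x j" using occ hr by blast
  show "\<forall>j<m. j \<noteq> i \<longrightarrow> A \<le> x j \<and> x j \<le> B" using occ rng by blast
  show "L = 0 \<or> (\<exists>j<m. j \<noteq> i \<and> x j < t \<and> t + x j = 2 * L)" using hl2 att by metis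
  show "R = 1 \<or> (\<exists>j<m. j \<noteq> i \<and> t < x j \<and> t + x j = 2 * R)" using hr2 att by metis
  show "A = t \<or> (\<exists>j<m. j \<noteq> i \<and> x j = A)" using eA att by metis
  show "B = t \<or> (\<exists>j<m. j \<noteq> i \<and> x j = B)" using eB att by metis
qed

lemma dev_vars:
  fixes i m :: nat and x :: "nat \<Rightarrow> real"
  assumes i: "i < m"
    and occ: "\<forall>j<m. j \<noteq> i \<longrightarrow> x j \<in> S" and att: "\<forall>v\<in>S. \<exists>j<m. j \<noteq> i \<and> x j = v"
    and L0: "0 \<le> L" and Lx: "L \<le> t" and xR: "t \<le> R" and R1: "R \<le> 1"
    and hl: "\<forall>v\<in>S. v < t \<longrightarrow> t + v \<le> 2*L"
    and hl2: "L = 0 \<or> (\<exists>v\<in>S. v < t \<and> t + v = 2*L)"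
    and hr: "\<forall>v\<in>S. t < v \<longrightarrow> 2*R \<le> t + v"
    and hr2: "R = 1 \<or> (\<exists>v\<in>S. t < v \<and> t + v = 2*R)"
    and rng: "\<forall>v\<in>S. A \<le> v \<and> v \<le> B" and rngt: "A \<le> t" "t \<le> B"
    and eA: "A = t \<or> A \<in> S" and eB: "B = t \<or> B \<in> S"
    and AB: "A < B" and s0: "0 \<le> A + B" and s2: "A + B \<le> 2"
  shows dev_inner: "t \<noteq> A \<Longrightarrow> t \<noteq> B \<Longrightarrow>
      bw_score c m (x(i := t)) i = (R - L) / real (card {j. j < m \<and> j \<noteq> i \<and> x j = t} + 1)"
    and dev_atA: "t = A \<Longrightarrow>
      bw_score c m (x(i := t)) i = (R - L - c * (1 - (A + B) / 2)) / real (card {j. j < m \<and> j \<noteq> i \<and> x j = t} + 1)"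
    and dev_atB: "t = B \<Longrightarrow>
      bw_score c m (x(i := t)) i = (R - L - c * ((A + B) / 2)) / real (card {j. j < m \<and> j \<noteq> i \<and> x j = t} + 1)"
proof -
  note D = dev_score2[OF assms, of c]
  have nBA: "(B = A) = False" using AB by simp
  show "t \<noteq> A \<Longrightarrow> t \<noteq> B \<Longrightarrow>
      bw_score c m (x(i := t)) i = (R - L) / real (card {j. j < m \<and> j \<noteq> i \<and> x j = t} + 1)"
    using D by simp
  show "t = A \<Longrightarrow>
      bw_score c m (x(i := t)) i = (R - L - c * (1 - (A + B) / 2)) / real (card {j. j < m \<and> j \<noteq> i \<and> x j = t} + 1)"
    using D by (simp only: if_P[OF refl] aux)
  show "t = B \<Longrightarrow>
      bw_score c m (x(i := t)) i = (R - L - c * ((A + B) / 2)) / real (card {j. j < m \<and> j \<noteq> i \<and> x j = t} + 1)"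
    using D nBA by (simp only: nBA if_False if_P[OF refl] aux)
qed

lemma config2:
  fixes i m :: nat and x :: "nat \<Rightarrow> real"
  assumes i: "i < m" and xi: "x i = p" and all: "\<forall>j<m. x j = p \<or> x j = r"
    and pr: "p < r" and p0: "0 \<le> p" and r1: "r \<le> 1"
    and er: "\<exists>j<m. x j = r" and ep: "\<exists>j<m. j \<noteq> i \<and> x j = p"
  shows config2_base: "bw_score c m x i = ((p + r) / 2 - c * (1 - (p + r) / 2)) / real (card {j. j < m \<and> x j = p})"
    and config2_mid: "p < t \<Longrightarrow> t < r \<Longrightarrow> bw_score c m (x(i := t)) i = (r - p) / 2"
    and config2_left: "0 \<le> t \<Longrightarrow> t < p \<Longrightarrow> bw_score c m (x(i := t)) i = (t + p) / 2 - c * (1 - (t + r) / 2)"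
    and config2_join: "bw_score c m (x(i := r)) i = ((1 - (p + r) / 2) - c * ((p + r) / 2)) / real (card {j. j < m \<and> x j = r} + 1)"
    and config2_right: "r < t \<Longrightarrow> t \<le> 1 \<Longrightarrow> bw_score c m (x(i := t)) i = 1 - (r + t) / 2 - c * ((p + t) / 2)"
proof -
  obtain jp where jp: "jp < m" "jp \<noteq> i" "x jp = p" using ep by auto
  obtain jr where jr: "jr < m" "jr \<noteq> i" "x jr = r" using er xi pr by (metis less_irrefl)
  have V: "\<And>j. j < m \<Longrightarrow> x j = p \<or> x j = r" using all by auto
  have cp: "real (card {j. j < m \<and> j \<noteq> i \<and> x j = p} + 1) = real (card {j. j < m \<and> x j = p})"
    using card_self[OF i, of x] xi by simp
  have cr: "card {j. j < m \<and> j \<noteq> i \<and> x j = r} = card {j. j < m \<and> x j = r}"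
    using card_notself[of x i r m] xi pr by simp
  have xu: "x(i := p) = x" using xi by auto
  have occ: "\<forall>j<m. j \<noteq> i \<longrightarrow> x j \<in> {p, r}" using all by auto
  have att: "\<forall>v\<in>{p, r}. \<exists>j<m. j \<noteq> i \<and> x j = v" using jp jr by auto
  show "bw_score c m x i = ((p + r) / 2 - c * (1 - (p + r) / 2)) / real (card {j. j < m \<and> x j = p})"
  proof -
    have "bw_score c m (x(i := p)) i = ((p + r) / 2 - 0 - c * (1 - (p + r) / 2)) / real (card {j. j < m \<and> j \<noteq> i \<and> x j = p} + 1)"
      by (rule dev_atA[OF i occ att, where L=0 and R="(p+r)/2" and A=p and B=r]) (use pr p0 r1 in auto)
    then show ?thesis by (simp only: xu cp diff_zero)
  qed
  show "bw_score c m (x(i := t)) i = (r - p) / 2" if t: "p < t" "t < r"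
  proof -
    have c0: "card {j. j < m \<and> j \<noteq> i \<and> x j = t} = 0"
      using V t by (intro card_zero_others) fastforce
    have "bw_score c m (x(i := t)) i = ((t + r) / 2 - (p + t) / 2) / real (card {j. j < m \<and> j \<noteq> i \<and> x j = t} + 1)"
      by (rule dev_inner[OF i occ att, where A=p and B=r]) (use pr p0 r1 t in auto)
    then show ?thesis by (simp only: c0 add_0 of_nat_1 div_by_1) (simp add: field_simps)
  qed
  show "bw_score c m (x(i := t)) i = (t + p) / 2 - c * (1 - (t + r) / 2)" if t: "0 \<le> t" "t < p"
  proof -
    have c0: "card {j. j < m \<and> j \<noteq> i \<and> x j = t} = 0"
      using V t pr by (intro card_zero_others) fastforce
    have "bw_score c m (x(i := t)) i = ((t + p) / 2 - 0 - c * (1 - (t + r) / 2)) / real (card {j. j < m \<and> j \<noteq> i \<and> x j = t} + 1)"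
      by (rule dev_atA[OF i occ att, where L=0 and R="(t+p)/2" and A=t and B=r]) (use pr p0 r1 t in auto)
    then show ?thesis using c0 by simp
  qed
  show "bw_score c m (x(i := r)) i = ((1 - (p + r) / 2) - c * ((p + r) / 2)) / real (card {j. j < m \<and> x j = r} + 1)"
  proof -
    have "bw_score c m (x(i := r)) i = (1 - (p + r) / 2 - c * ((p + r) / 2)) / real (card {j. j < m \<and> j \<noteq> i \<and> x j = r} + 1)"
      by (rule dev_atB[OF i occ att, where L="(p+r)/2" and R=1 and A=p and B=r]) (use pr p0 r1 in auto)
    then show ?thesis by (simp only: cr)
  qed
  show "bw_score c m (x(i := t)) i = 1 - (r + t) / 2 - c * ((p + t) / 2)" if t: "r < t" "t \<le> 1"
  proof -
    have c0: "card {j. j < m \<and> j \<noteq> i \<and> x j = t} = 0"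
      using V t pr by (intro card_zero_others) fastforce
    have "bw_score c m (x(i := t)) i = (1 - (r + t) / 2 - c * ((p + t) / 2)) / real (card {j. j < m \<and> j \<noteq> i \<and> x j = t} + 1)"
      by (rule dev_atB[OF i occ att, where L="(r+t)/2" and R=1 and A=p and B=t]) (use pr p0 r1 t in auto)
    then show ?thesis using c0 by simp
  qed
qed

lemma config3p:
  fixes i m :: nat and x :: "nat \<Rightarrow> real"
  assumes i: "i < m" and xi: "x i = p" and all: "\<forall>j<m. x j = p \<or> x j = q \<or> x j = r"
    and pq: "p < q" and qr: "q < r" and p0: "0 \<le> p" and r1: "r \<le> 1"
    and er: "\<exists>j<m. x j = r" and eq: "\<exists>j<m. x j = q" and ep: "\<exists>j<m. j \<noteq> i \<and> x j = p"
  shows config3p_base: "bw_score c m x i = ((p + q) / 2 - c * (1 - (p + r) / 2)) / real (card {j. j < m \<and> x j = p})"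
    and config3p_left: "0 \<le> t \<Longrightarrow> t < p \<Longrightarrow> bw_score c m (x(i := t)) i = (t + p) / 2 - c * (1 - (t + r) / 2)"
    and config3p_mid1: "p < t \<Longrightarrow> t < q \<Longrightarrow> bw_score c m (x(i := t)) i = (q - p) / 2"
    and config3p_atq: "bw_score c m (x(i := q)) i = ((r - p) / 2) / real (card {j. j < m \<and> x j = q} + 1)"
    and config3p_mid2: "q < t \<Longrightarrow> t < r \<Longrightarrow> bw_score c m (x(i := t)) i = (r - q) / 2"
    and config3p_join: "bw_score c m (x(i := r)) i = ((1 - (q + r) / 2) - c * ((p + r) / 2)) / real (card {j. j < m \<and> x j = r} + 1)"
    and config3p_right: "r < t \<Longrightarrow> t \<le> 1 \<Longrightarrow> bw_score c m (x(i := t)) i = 1 - (r + t) / 2 - c * ((p + t) / 2)"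
proof -
  obtain jp where jp: "jp < m" "jp \<noteq> i" "x jp = p" using ep by auto
  obtain jr where jr: "jr < m" "jr \<noteq> i" "x jr = r" using er xi pq qr by (metis less_irrefl less_trans)
  obtain jq where jq: "jq < m" "jq \<noteq> i" "x jq = q" using eq xi pq by (metis less_irrefl)
  have V: "\<And>j. j < m \<Longrightarrow> x j = p \<or> x j = q \<or> x j = r" using all by auto
  have cp: "real (card {j. j < m \<and> j \<noteq> i \<and> x j = p} + 1) = real (card {j. j < m \<and> x j = p})"
    using card_self[OF i, of x] xi by simp
  have cr: "card {j. j < m \<and> j \<noteq> i \<and> x j = r} = card {j. j < m \<and> x j = r}"
    using card_notself[of x i r m] xi pq qr by simp
  have cq: "card {j. j < m \<and> j \<noteq> i \<and> x j = q} = card {j. j < m \<and> x j = q}"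
    using card_notself[of x i q m] xi pq by simp
  have xu: "x(i := p) = x" using xi by auto
  have occ: "\<forall>j<m. j \<noteq> i \<longrightarrow> x j \<in> {p, q, r}" using all by auto
  have att: "\<forall>v\<in>{p, q, r}. \<exists>j<m. j \<noteq> i \<and> x j = v" using jp jr jq by auto
  show "bw_score c m x i = ((p + q) / 2 - c * (1 - (p + r) / 2)) / real (card {j. j < m \<and> x j = p})"
  proof -
    have "bw_score c m (x(i := p)) i = ((p + q) / 2 - 0 - c * (1 - (p + r) / 2)) / real (card {j. j < m \<and> j \<noteq> i \<and> x j = p} + 1)"
      by (rule dev_atA[OF i occ att, where L=0 and R="(p+q)/2" and A=p and B=r]) (use pq qr p0 r1 in auto)
    then show ?thesis by (simp only: xu cp diff_zero)
  qed
  show "bw_score c m (x(i := t)) i = (t + p) / 2 - c * (1 - (t + r) / 2)" if t: "0 \<le> t" "t < p"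
  proof -
    have c0: "card {j. j < m \<and> j \<noteq> i \<and> x j = t} = 0"
      using V t pq qr by (intro card_zero_others) fastforce
    have "bw_score c m (x(i := t)) i = ((t + p) / 2 - 0 - c * (1 - (t + r) / 2)) / real (card {j. j < m \<and> j \<noteq> i \<and> x j = t} + 1)"
      by (rule dev_atA[OF i occ att, where L=0 and R="(t+p)/2" and A=t and B=r]) (use pq qr p0 r1 t in auto)
    then show ?thesis using c0 by simp
  qed
  show "bw_score c m (x(i := t)) i = (q - p) / 2" if t: "p < t" "t < q"
  proof -
    have c0: "card {j. j < m \<and> j \<noteq> i \<and> x j = t} = 0"
      using V t pq qr by (intro card_zero_others) fastforce
    have "bw_score c m (x(i := t)) i = ((t + q) / 2 - (p + t) / 2) / real (card {j. j < m \<and> j \<noteq> i \<and> x j = t} + 1)"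
      by (rule dev_inner[OF i occ att, where A=p and B=r]) (use pq qr p0 r1 t in auto)
    then show ?thesis by (simp only: c0 add_0 of_nat_1 div_by_1) (simp add: field_simps)
  qed
  show "bw_score c m (x(i := q)) i = ((r - p) / 2) / real (card {j. j < m \<and> x j = q} + 1)"
  proof -
    have "bw_score c m (x(i := q)) i = ((q + r) / 2 - (p + q) / 2) / real (card {j. j < m \<and> j \<noteq> i \<and> x j = q} + 1)"
      by (rule dev_inner[OF i occ att, where A=p and B=r]) (use pq qr p0 r1 in auto)
    then show ?thesis by (simp only: cq) (simp add: field_simps)
  qed
  show "bw_score c m (x(i := t)) i = (r - q) / 2" if t: "q < t" "t < r"
  proof -
    have c0: "card {j. j < m \<and> j \<noteq> i \<and> x j = t} = 0"
      using V t pq qr by (intro card_zero_others) fastforce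
    have "bw_score c m (x(i := t)) i = ((t + r) / 2 - (q + t) / 2) / real (card {j. j < m \<and> j \<noteq> i \<and> x j = t} + 1)"
      by (rule dev_inner[OF i occ att, where A=p and B=r]) (use pq qr p0 r1 t in auto)
    then show ?thesis by (simp only: c0 add_0 of_nat_1 div_by_1) (simp add: field_simps)
  qed
  show "bw_score c m (x(i := r)) i = ((1 - (q + r) / 2) - c * ((p + r) / 2)) / real (card {j. j < m \<and> x j = r} + 1)"
  proof -
    have "bw_score c m (x(i := r)) i = (1 - (q + r) / 2 - c * ((p + r) / 2)) / real (card {j. j < m \<and> j \<noteq> i \<and> x j = r} + 1)"
      by (rule dev_atB[OF i occ att, where L="(q+r)/2" and R=1 and A=p and B=r]) (use pq qr p0 r1 in auto)
    then show ?thesis by (simp only: cr)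
  qed
  show "bw_score c m (x(i := t)) i = 1 - (r + t) / 2 - c * ((p + t) / 2)" if t: "r < t" "t \<le> 1"
  proof -
    have c0: "card {j. j < m \<and> j \<noteq> i \<and> x j = t} = 0"
      using V t pq qr by (intro card_zero_others) fastforce
    have "bw_score c m (x(i := t)) i = (1 - (r + t) / 2 - c * ((p + t) / 2)) / real (card {j. j < m \<and> j \<noteq> i \<and> x j = t} + 1)"
      by (rule dev_atB[OF i occ att, where L="(r+t)/2" and R=1 and A=p and B=t]) (use pq qr p0 r1 t in auto)
    then show ?thesis using c0 by simp
  qed
qed

lemma config3q:
  fixes i m :: nat and x :: "nat \<Rightarrow> real"
  assumes i: "i < m" and xi: "x i = q" and all: "\<forall>j<m. j \<noteq> i \<longrightarrow> x j = p \<or> x j = r"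
    and pq: "p < q" and qr: "q < r" and p0: "0 \<le> p" and r1: "r \<le> 1"
    and er: "\<exists>j<m. x j = r" and ep: "\<exists>j<m. x j = p"
  shows config3q_left: "0 \<le> t \<Longrightarrow> t < p \<Longrightarrow> bw_score c m (x(i := t)) i = (t + p) / 2 - c * (1 - (t + r) / 2)"
    and config3q_mid: "p < t \<Longrightarrow> t < r \<Longrightarrow> bw_score c m (x(i := t)) i = (r - p) / 2"
    and config3q_join: "bw_score c m (x(i := p)) i = ((p + r) / 2 - c * (1 - (p + r) / 2)) / real (card {j. j < m \<and> x j = p} + 1)"
proof -
  obtain jp where jp: "jp < m" "jp \<noteq> i" "x jp = p" using ep xi pq by (metis less_irrefl)
  obtain jr where jr: "jr < m" "jr \<noteq> i" "x jr = r" using er xi qr by (metis less_irrefl)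
  have V: "\<And>j. j < m \<Longrightarrow> j \<noteq> i \<Longrightarrow> x j = p \<or> x j = r" using all by auto
  have cp: "card {j. j < m \<and> j \<noteq> i \<and> x j = p} = card {j. j < m \<and> x j = p}"
    using card_notself[of x i p m] xi pq by simp
  have occ: "\<forall>j<m. j \<noteq> i \<longrightarrow> x j \<in> {p, r}" using all by auto
  have att: "\<forall>v\<in>{p, r}. \<exists>j<m. j \<noteq> i \<and> x j = v" using jp jr by auto
  show "bw_score c m (x(i := t)) i = (t + p) / 2 - c * (1 - (t + r) / 2)" if t: "0 \<le> t" "t < p"
  proof -
    have c0: "card {j. j < m \<and> j \<noteq> i \<and> x j = t} = 0"
      using V t pq qr by (intro card_zero_others) fastforce
    have "bw_score c m (x(i := t)) i = ((t + p) / 2 - 0 - c * (1 - (t + r) / 2)) / real (card {j. j < m \<and> j \<noteq> i \<and> x j = t} + 1)"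
      by (rule dev_atA[OF i occ att, where L=0 and R="(t+p)/2" and A=t and B=r]) (use pq qr p0 r1 t in auto)
    then show ?thesis using c0 by simp
  qed
  show "bw_score c m (x(i := t)) i = (r - p) / 2" if t: "p < t" "t < r"
  proof -
    have c0: "card {j. j < m \<and> j \<noteq> i \<and> x j = t} = 0"
      using V t pq qr by (intro card_zero_others) fastforce
    have "bw_score c m (x(i := t)) i = ((t + r) / 2 - (p + t) / 2) / real (card {j. j < m \<and> j \<noteq> i \<and> x j = t} + 1)"
      by (rule dev_inner[OF i occ att, where A=p and B=r]) (use pq qr p0 r1 t in auto)
    then show ?thesis by (simp only: c0 add_0 of_nat_1 div_by_1) (simp add: field_simps)
  qed
  show "bw_score c m (x(i := p)) i = ((p + r) / 2 - c * (1 - (p + r) / 2)) / real (card {j. j < m \<and> x j = p} + 1)"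
  proof -
    have "bw_score c m (x(i := p)) i = ((p + r) / 2 - 0 - c * (1 - (p + r) / 2)) / real (card {j. j < m \<and> j \<noteq> i \<and> x j = p} + 1)"
      by (rule dev_atA[OF i occ att, where L=0 and R="(p+r)/2" and A=p and B=r]) (use pq qr p0 r1 in auto)
    then show ?thesis by (simp only: cp diff_zero)
  qed
qed

lemma score_reflect: "bw_score c m (\<lambda>j. 1 - x j) i = bw_score c m x i"
proof -
  have h: "\<And>j y. \<bar>(1 - x j) - (1 - y)\<bar> = \<bar>x j - y\<bar>" by (simp add: abs_minus_commute)
  have f: "first_share m (\<lambda>j. 1 - x j) i (1 - y) = first_share m x i y" for y
    unfolding first_share_def by (simp only: h)
  have l: "last_share m (\<lambda>j. 1 - x j) i (1 - y) = last_share m x i y" for y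
    unfolding last_share_def by (simp only: h)
  have "bw_score c m (\<lambda>j. 1 - x j) i = integral {0..1} (\<lambda>y. (\<lambda>z. first_share m (\<lambda>j. 1 - x j) i z - c * last_share m (\<lambda>j. 1 - x j) i z) (1 - y))"
    unfolding bw_score_def by (rule reflect_int[symmetric])
  also have "\<dots> = bw_score c m x i" unfolding bw_score_def by (simp only: f l)
  finally show ?thesis .
qed

lemma equil_reflect:
  assumes "is_equilibrium c m x"
  shows "is_equilibrium c m (\<lambda>j. 1 - x j)"
  unfolding is_equilibrium_def
proof (intro conjI allI impI ballI)
  show "is_profile m (\<lambda>j. 1 - x j)" using assms by (auto simp: is_equilibrium_def is_profile_def)
  fix i t assume i: "i < m" and t: "t \<in> {0..(1::real)}"
  have "((\<lambda>j. 1 - x j)(i := t)) = (\<lambda>j. 1 - (x(i := 1 - t)) j)" by auto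
  then have "bw_score c m ((\<lambda>j. 1 - x j)(i := t)) i = bw_score c m (x(i := 1 - t)) i"
    by (simp only: score_reflect)
  also have "\<dots> \<le> bw_score c m x i" using assms i t by (auto simp: is_equilibrium_def)
  also have "\<dots> = bw_score c m (\<lambda>j. 1 - x j) i" by (simp only: score_reflect)
  finally show "bw_score c m ((\<lambda>j. 1 - x j)(i := t)) i \<le> bw_score c m (\<lambda>j. 1 - x j) i" .
qed

lemma left_ge2:
  fixes m :: nat and x :: "nat \<Rightarrow> real"
  assumes eq: "is_equilibrium c m x" and c0: "0 \<le> c"
    and lo: "\<forall>j<m. A \<le> x j" and eA: "\<exists>j<m. x j = A" and ne: "\<exists>j<m. x j \<noteq> A"
  shows "card {j. j < m \<and> x j = A} \<ge> 2"
proof (rule ccontr)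
  assume "\<not> 2 \<le> card {j. j < m \<and> x j = A}"
  then have c1: "card {j. j < m \<and> x j = A} < 2" by simp
  obtain i where i: "i < m" "x i = A" using eA by auto
  have prof: "\<forall>j<m. 0 \<le> x j \<and> x j \<le> 1" using eq by (auto simp: is_equilibrium_def is_profile_def)
  have others: "\<forall>j<m. j \<noteq> i \<longrightarrow> x j \<noteq> A"
  proof (intro allI impI)
    fix j assume j: "j < m" "j \<noteq> i"
    show "x j \<noteq> A"
    proof
      assume "x j = A"
      then have "{i, j} \<subseteq> {j. j < m \<and> x j = A}" using i j by auto
      then have "card {i, j} \<le> card {j. j < m \<and> x j = A}"
        by (intro card_mono) (simp_all add: finite_Collect_conjI)
      then show False using c1 j by simp
    qed
  qed
  define Oth where "Oth = x ` ({..<m} - {i})"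
  have finOth: "finite Oth" unfolding Oth_def by simp
  have neOth: "Oth \<noteq> {}" using ne i unfolding Oth_def by auto
  define A2 where "A2 = Min Oth"
  define B where "B = Max Oth"
  have occ: "\<forall>j<m. j \<noteq> i \<longrightarrow> x j \<in> Oth" unfolding Oth_def by auto
  have att: "\<forall>v\<in>Oth. \<exists>j<m. j \<noteq> i \<and> x j = v" unfolding Oth_def by auto
  have Ogt: "\<forall>v\<in>Oth. A2 \<le> v \<and> v \<le> B" using finOth unfolding A2_def B_def by auto
  have A2in: "A2 \<in> Oth" and Bin: "B \<in> Oth" using finOth neOth unfolding A2_def B_def by auto
  have AA2: "A < A2" using A2in att others lo by (metis order_le_imp_less_or_eq)
  have Ounit: "\<forall>v\<in>Oth. 0 \<le> v \<and> v \<le> 1" using att prof by metis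
  have A0: "0 \<le> A" and A1: "A \<le> 1" using prof i by auto
  have A2B: "A2 \<le> B" using Ogt A2in by auto
  have B1: "B \<le> 1" and A21: "A2 \<le> 1" using Ounit Bin A2in by auto
  have xu: "x(i := A) = x" using i by auto
  have c0A: "card {j. j < m \<and> j \<noteq> i \<and> x j = A} = 0"
    by (rule card_zero_others) (use others in auto)
  have "bw_score c m (x(i := A)) i = ((A + A2) / 2 - 0 - c * (1 - (A + B) / 2)) / real (card {j. j < m \<and> j \<noteq> i \<and> x j = A} + 1)"
    by (rule dev_atA[OF i(1) occ att, where L=0 and R="(A+A2)/2" and A=A and B=B])
       (use Ogt A2in Bin AA2 A2B A0 B1 A21 in auto)
  then have S0: "bw_score c m x i = (A + A2) / 2 - c * (1 - (A + B) / 2)"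
    by (simp add: xu c0A)
  define t where "t = (A + A2) / 2"
  have tA: "A < t" "t < A2" using AA2 by (auto simp: t_def)
  have c0t: "card {j. j < m \<and> j \<noteq> i \<and> x j = t} = 0"
    by (rule card_zero_others) (use occ Ogt tA in fastforce)
  have "bw_score c m (x(i := t)) i = ((t + A2) / 2 - 0 - c * (1 - (t + B) / 2)) / real (card {j. j < m \<and> j \<noteq> i \<and> x j = t} + 1)"
    by (rule dev_atA[OF i(1) occ att, where L=0 and R="(t+A2)/2" and A=t and B=B])
       (use Ogt A2in Bin AA2 A2B A0 B1 A21 tA in auto)
  then have S1: "bw_score c m (x(i := t)) i = (t + A2) / 2 - c * (1 - (t + B) / 2)"
    by (simp add: c0t)
  have tin: "t \<in> {0..1}" using tA A0 A21 by auto
  have "bw_score c m (x(i := t)) i \<le> bw_score c m x i"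
    using eq i tin by (auto simp: is_equilibrium_def)
  then have "(t + A2) / 2 - c * (1 - (t + B) / 2) \<le> (A + A2) / 2 - c * (1 - (A + B) / 2)"
    using S0 S1 by simp
  then have "(t - A) * (1 + c) \<le> 0" by (simp add: field_simps)
  moreover have "(t - A) * (1 + c) > 0" using tA c0 by (intro mult_pos_pos) auto
  ultimately show False by simp
qed

lemma lim_left:
  fixes K S p k :: real
  assumes p: "0 < p" and k: "0 \<le> k" and h: "\<forall>t. 0 \<le> t \<and> t < p \<longrightarrow> K - k * (p - t) \<le> S"
  shows "K \<le> S"
proof (rule ccontr)
  assume "\<not> K \<le> S"
  then have KS: "0 < K - S" by simp
  define \<delta> where "\<delta> = min p ((K - S) / (k + 1))"
  have d0: "0 < \<delta>" using p KS k by (auto simp: \<delta>_def)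
  have dp: "\<delta> \<le> p" by (simp add: \<delta>_def)
  have dK: "\<delta> \<le> (K - S) / (k + 1)" by (simp add: \<delta>_def)
  have "k * \<delta> \<le> k * ((K - S) / (k + 1))" using dK k by (rule mult_left_mono)
  also have "\<dots> < K - S" using KS k by (simp add: field_simps)
  finally have kd: "k * \<delta> < K - S" .
  have "K - k * (p - (p - \<delta>)) \<le> S" using h[rule_format, of "p - \<delta>"] d0 dp by linarith
  then show False using kd by simp
qed

lemma extremes:
  fixes m :: nat and x :: "nat \<Rightarrow> real"
  assumes N: "is_NCNE c m x" and c0: "0 \<le> c"
  obtains A B where "A < B" "\<forall>j<m. A \<le> x j \<and> x j \<le> B" "0 \<le> A" "B \<le> 1"
    "card {j. j < m \<and> x j = A} \<ge> 2" "card {j. j < m \<and> x j = B} \<ge> 2"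
proof -
  have eq: "is_equilibrium c m x" and ne: "\<exists>i<m. \<exists>j<m. x i \<noteq> x j" using N by (auto simp: is_NCNE_def)
  have prof: "\<forall>j<m. 0 \<le> x j \<and> x j \<le> 1" using eq by (auto simp: is_equilibrium_def is_profile_def)
  obtain i0 j0 where ij: "i0 < m" "j0 < m" "x i0 \<noteq> x j0" using ne by auto
  define A where "A = Min (x ` {..<m})"
  define B where "B = Max (x ` {..<m})"
  have fin: "finite (x ` {..<m})" and nem: "x ` {..<m} \<noteq> {}" using ij by auto
  have rng: "\<forall>j<m. A \<le> x j \<and> x j \<le> B" using fin unfolding A_def B_def by auto
  have eA: "\<exists>j<m. x j = A" using Min_in[OF fin nem] unfolding A_def by auto
  have eB: "\<exists>j<m. x j = B" using Max_in[OF fin nem] unfolding B_def by auto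
  have AB: "A < B" using rng ij by (metis order_le_less order_trans not_le antisym)
  have A0: "0 \<le> A" using eA prof by auto
  have B1: "B \<le> 1" using eB prof by auto
  have nA: "card {j. j < m \<and> x j = A} \<ge> 2"
    by (rule left_ge2[OF eq c0]) (use rng eA eB AB in auto)
  have eq': "is_equilibrium c m (\<lambda>j. 1 - x j)" by (rule equil_reflect[OF eq])
  have "card {j. j < m \<and> 1 - x j = 1 - B} \<ge> 2"
    by (rule left_ge2[OF eq' c0]) (use rng eA eB AB in auto)
  then have nB: "card {j. j < m \<and> x j = B} \<ge> 2" by simp
  show ?thesis by (rule that[OF AB rng A0 B1 nA nB])
qed

lemma alg4:
  fixes c p r :: real
  assumes c0: "0 \<le> c" and c1: "c < 1" and p0: "0 \<le> p" and pr: "p < r" and r1: "r \<le> 1"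
    and h1: "(r - p) / 2 \<le> ((p + r) / 2 - c * (1 - (p + r) / 2)) / 2"
    and h2: "((1 - p) - (1 - r)) / 2 \<le> (((1 - r) + (1 - p)) / 2 - c * (1 - ((1 - r) + (1 - p)) / 2)) / 2"
    and h3: "0 < p \<Longrightarrow> p - c * (1 - (p + r) / 2) \<le> ((p + r) / 2 - c * (1 - (p + r) / 2)) / 2"
    and h4: "0 < 1 - r \<Longrightarrow> (1 - r) - c * (1 - ((1 - r) + (1 - p)) / 2) \<le> (((1 - r) + (1 - p)) / 2 - c * (1 - ((1 - r) + (1 - p)) / 2)) / 2"
  shows "p = (1 + c) / 4 \<and> r = 1 - (1 + c) / 4"
proof -
  have H1: "2*r - 2*p \<le> p + r - 2*c + c*p + c*r" using h1 by (simp add: field_simps)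
  have H2: "2*r - 2*p \<le> 2 - p - r - c*p - c*r" using h2 by (simp add: field_simps)
  have r0: "0 < r" using p0 pr by linarith
  have crr: "c * r < r" using c1 r0 by (metis mult_strict_right_mono mult_1)
  have cp0: "0 \<le> c * p" using c0 p0 by simp
  have cpp: "c * p \<le> p" using c1 p0 by (metis less_imp_le mult_right_mono mult_1)
  have pp: "0 < p"
  proof (rule ccontr)
    assume "\<not> 0 < p" then have "p = 0" using p0 by simp
    then show False using H1 crr c0 by simp
  qed
  have rr: "0 < 1 - r"
  proof (rule ccontr)
    assume "\<not> 0 < 1 - r" then have "r = 1" using r1 by simp
    then show False using H2 cp0 c0 pr by simp
  qed
  have H3: "4*p - 4*c + 2*c*p + 2*c*r \<le> p + r - 2*c + c*p + c*r" using h3[OF pp] by (simp add: field_simps)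
  have H4: "4 - 4*r - 2*c*p - 2*c*r \<le> 2 - r - p - c*r - c*p" using h4[OF rr] by (simp add: field_simps)
  have E1: "p + r + c*p + c*r = 1 + c" using H1 H2 H3 H4 by linarith
  have "(p + r - 1) * (1 + c) = p + r + c*p + c*r - 1 - c" by (simp add: algebra_simps)
  then have "(p + r - 1) * (1 + c) = 0" using E1 by simp
  then have s1: "p + r = 1" using c0 by simp
  then have "c * p + c * r = c" by (metis distrib_left mult_1_right)
  then have "4 * p = 1 + c" using H1 H2 H3 H4 s1 by linarith
  then show ?thesis using s1 by (simp add: field_simps)
qed

lemma two_elems:
  fixes P :: "nat \<Rightarrow> bool"
  assumes "card {j. j < m \<and> P j} \<ge> 2"
  obtains a b where "a < m" "b < m" "a \<noteq> b" "P a" "P b"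
proof -
  let ?S = "{j. j < m \<and> P j}"
  have "?S \<noteq> {}" using assms by (metis card.empty not_numeral_le_zero)
  then obtain a where a: "a \<in> ?S" by auto
  have "\<exists>b\<in>?S. b \<noteq> a"
  proof (rule ccontr)
    assume "\<not> (\<exists>b\<in>?S. b \<noteq> a)"
    then have "?S \<subseteq> {a}" by auto
    then have "card ?S \<le> 1" by (metis card.empty card.insert_remove card_mono finite.intros(1) finite_insert insert_Diff_single empty_Diff One_nat_def card_insert_if dual_order.refl finite.emptyI)
    then show False using assms by simp
  qed
  then obtain b where "b \<in> ?S" "b \<noteq> a" by auto
  then show ?thesis using a that by auto
qed



lemma eq2_facts:
  fixes m :: nat and x :: "nat \<Rightarrow> real"
  assumes eq: "is_equilibrium c m x" and all: "\<forall>j<m. x j = p \<or> x j = r"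
    and pr: "p < r" and p0: "0 \<le> p" and r1: "r \<le> 1"
    and np: "card {j. j < m \<and> x j = p} \<ge> 2" and er: "\<exists>j<m. x j = r" and c0: "0 \<le> c"
  shows "(r - p) / 2 \<le> ((p + r) / 2 - c * (1 - (p + r) / 2)) / real (card {j. j < m \<and> x j = p})"
    and "0 < p \<Longrightarrow> p - c * (1 - (p + r) / 2) \<le> ((p + r) / 2 - c * (1 - (p + r) / 2)) / real (card {j. j < m \<and> x j = p})"
proof -
  obtain a b where ab: "a < m" "b < m" "a \<noteq> b" "x a = p" "x b = p" using two_elems[OF np] by blast
  have ep: "\<exists>j<m. j \<noteq> a \<and> x j = p" using ab by auto
  note base = config2_base[OF ab(1) ab(4) all pr p0 r1 er ep, of c]
  have dev: "bw_score c m (x(a := t)) a \<le> bw_score c m x a" if "t \<in> {0..1}" for t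
    using eq ab that by (auto simp: is_equilibrium_def)
  have tm: "(p + r) / 2 \<in> {0..1}" using p0 pr r1 by auto
  show "(r - p) / 2 \<le> ((p + r) / 2 - c * (1 - (p + r) / 2)) / real (card {j. j < m \<and> x j = p})"
    using dev[OF tm] config2_mid[OF ab(1) ab(4) all pr p0 r1 er ep, of "(p+r)/2" c] base pr by simp
  assume pp: "0 < p"
  show "p - c * (1 - (p + r) / 2) \<le> ((p + r) / 2 - c * (1 - (p + r) / 2)) / real (card {j. j < m \<and> x j = p})"
  proof (rule lim_left[OF pp, where k="(1 + c) / 2"])
    show "0 \<le> (1 + c) / 2" using c0 by simp
    show "\<forall>t. 0 \<le> t \<and> t < p \<longrightarrow> p - c * (1 - (p + r) / 2) - (1 + c) / 2 * (p - t)
        \<le> ((p + r) / 2 - c * (1 - (p + r) / 2)) / real (card {j. j < m \<and> x j = p})"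
    proof (intro allI impI)
      fix t assume t: "0 \<le> t \<and> t < p"
      have "p - c * (1 - (p + r) / 2) - (1 + c) / 2 * (p - t) = (t + p) / 2 - c * (1 - (t + r) / 2)"
        by (simp add: field_simps)
      also have "\<dots> = bw_score c m (x(a := t)) a"
        using config2_left[OF ab(1) ab(4) all pr p0 r1 er ep, of t c] t by simp
      also have "\<dots> \<le> bw_score c m x a" using dev t pp pr r1 by auto
      finally show "p - c * (1 - (p + r) / 2) - (1 + c) / 2 * (p - t)
        \<le> ((p + r) / 2 - c * (1 - (p + r) / 2)) / real (card {j. j < m \<and> x j = p})" using base by simp
    qed
  qed
qed

lemma card_split:
  fixes m :: nat and x :: "nat \<Rightarrow> real"
  assumes "A \<noteq> B"
  shows "card {j. j < m \<and> x j = A} + card {j. j < m \<and> x j = B} = card {j. j < m \<and> (x j = A \<or> x j = B)}"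
proof -
  have "{j. j < m \<and> (x j = A \<or> x j = B)} = {j. j < m \<and> x j = A} \<union> {j. j < m \<and> x j = B}" by auto
  moreover have "{j. j < m \<and> x j = A} \<inter> {j. j < m \<and> x j = B} = {}" using assms by auto
  ultimately show ?thesis by (simp add: card_Un_disjoint finite_Collect_conjI)
qed

lemma card_le_m:
  fixes m :: nat
  shows "card {j. j < m \<and> P j} \<le> m"
proof -
  have "card {j. j < m \<and> P j} \<le> card {..<m}" by (rule card_mono) auto
  then show ?thesis by simp
qed

lemma card_eq_m:
  fixes m :: nat
  assumes "card {j. j < m \<and> P j} = m"
  shows "\<forall>j<m. P j"
proof -
  have "{j. j < m \<and> P j} = {..<m}"
    by (rule card_subset_eq) (use assms in auto)
  then show ?thesis by auto
qed

lemma uniq4: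
  fixes x :: "nat \<Rightarrow> real"
  assumes N: "is_NCNE c 4 x" and c0: "0 \<le> c" and c1: "c < 1"
  shows "card {i. i < 4 \<and> x i = (1 + c) / 4} = 2 \<and> card {i. i < 4 \<and> x i = 1 - (1 + c) / 4} = 2"
proof -
  have eq: "is_equilibrium c 4 x" using N by (simp add: is_NCNE_def)
  obtain A B where AB: "A < B" and rng: "\<forall>j<4. A \<le> x j \<and> x j \<le> B" and A0: "0 \<le> A" and B1: "B \<le> 1"
    and nA: "card {j. j < 4 \<and> x j = A} \<ge> 2" and nB: "card {j. j < 4 \<and> x j = B} \<ge> 2"
    using extremes[OF N c0] by blast
  have sp: "card {j. j < 4 \<and> x j = A} + card {j. j < (4::nat) \<and> x j = B} = card {j. j < 4 \<and> (x j = A \<or> x j = B)}"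
    using card_split[of A B 4 x] AB by simp
  have le: "card {j. j < 4 \<and> (x j = A \<or> x j = B)} \<le> 4" by (rule card_le_m)
  have cA: "card {j. j < 4 \<and> x j = A} = 2" and cB: "card {j. j < 4 \<and> x j = B} = 2"
    using sp le nA nB by linarith+
  have all: "\<forall>j<4. x j = A \<or> x j = B"
    by (rule card_eq_m) (use sp cA cB in simp)
  have eB: "\<exists>j<4. x j = B" using two_elems[OF nB] by blast
  have eA: "\<exists>j<4. x j = A" using two_elems[OF nA] by blast
  note F = eq2_facts[OF eq all AB A0 B1 nA eB c0]
  have eq': "is_equilibrium c 4 (\<lambda>j. 1 - x j)" by (rule equil_reflect[OF eq])
  have all': "\<forall>j<4. 1 - x j = 1 - B \<or> 1 - x j = 1 - A" using all by auto
  have nB': "card {j. j < 4 \<and> 1 - x j = 1 - B} \<ge> 2" using nB by simp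
  have eA': "\<exists>j<4. 1 - x j = 1 - A" using eA by simp
  note F' = eq2_facts[OF eq' all' _ _ _ nB' eA' c0]
  have "A = (1 + c) / 4 \<and> B = 1 - (1 + c) / 4"
  proof (rule alg4[OF c0 c1 A0 AB B1])
    show "(B - A) / 2 \<le> ((A + B) / 2 - c * (1 - (A + B) / 2)) / 2" using F(1) cA by simp
    show "0 < A \<Longrightarrow> A - c * (1 - (A + B) / 2) \<le> ((A + B) / 2 - c * (1 - (A + B) / 2)) / 2"
      using F(2) cA by simp
    show "((1 - A) - (1 - B)) / 2 \<le> (((1 - B) + (1 - A)) / 2 - c * (1 - ((1 - B) + (1 - A)) / 2)) / 2"
      using F'(1) AB A0 B1 cB by simp
    show "0 < 1 - B \<Longrightarrow> (1 - B) - c * (1 - ((1 - B) + (1 - A)) / 2) \<le> (((1 - B) + (1 - A)) / 2 - c * (1 - ((1 - B) + (1 - A)) / 2)) / 2"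
      using F'(2) AB A0 B1 cB by simp
  qed
  then have hA: "A = (1 + c) / 4" and hB: "B = 1 - (1 + c) / 4" by auto
  show ?thesis
    apply (subst hB[symmetric])
    apply (subst hA[symmetric])
    using cA cB by simp
qed

lemma dev4:
  fixes y :: "nat \<Rightarrow> real"
  assumes c0: "0 \<le> c" and c1: "c < 1" and pdef: "p = (1 + c) / 4" and rdef: "r = 1 - (1 + c) / 4"
    and all: "\<forall>j<4. y j = p \<or> y j = r"
    and np: "card {j. j < 4 \<and> y j = p} = 2" and nr: "card {j. j < 4 \<and> y j = r} = 2"
    and i: "i < 4" and yi: "y i = p" and t: "0 \<le> t" "t \<le> 1"
  shows "bw_score c 4 (y(i := t)) i \<le> bw_score c 4 y i"
proof -
  have pr: "p < r" unfolding pdef rdef using c1 by (simp add: field_simps)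
  have p0: "0 \<le> p" unfolding pdef using c0 by (simp add: field_simps)
  have r1: "r \<le> 1" unfolding rdef using c0 by (simp add: field_simps)
  have s1: "p + r = 1" using pdef rdef by simp
  obtain a b where ab: "a < 4" "b < 4" "a \<noteq> b" "y a = p" "y b = p" using two_elems[of 4 "\<lambda>j. y j = p"] np by auto
  have ep: "\<exists>j<4. j \<noteq> i \<and> y j = p" using ab by (metis)
  have er: "\<exists>j<4. y j = r" using two_elems[of 4 "\<lambda>j. y j = r"] nr by auto
  have base: "bw_score c 4 y i = (1 - c) / 4"
    using config2_base[OF i yi all pr p0 r1 er ep, of c] np s1 by simp
  consider "t < p" | "t = p" | "p < t \<and> t < r" | "t = r" | "r < t" by linarith
  then show ?thesis
  proof cases
    case 1
    have "bw_score c 4 (y(i := t)) i = (t + p) / 2 - c * (1 - (t + r) / 2)"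
      using config2_left[OF i yi all pr p0 r1 er ep, of t c] t 1 by simp
    moreover have "c * t \<le> c * p" using 1 c0 by (simp add: mult_left_mono)
    ultimately show ?thesis using base 1 pdef rdef by (simp add: field_simps)
  next
    case 2
    then have "y(i := t) = y" using yi by auto
    then show ?thesis by simp
  next
    case 3
    have "bw_score c 4 (y(i := t)) i = (r - p) / 2"
      using config2_mid[OF i yi all pr p0 r1 er ep, of t c] 3 by simp
    then show ?thesis using base pdef rdef by (simp add: field_simps)
  next
    case 4
    have "bw_score c 4 (y(i := t)) i = ((1 - (p + r) / 2) - c * ((p + r) / 2)) / real (card {j. j < 4 \<and> y j = r} + 1)"
      using config2_join[OF i yi all pr p0 r1 er ep, of c] 4 by simp
    then show ?thesis using base s1 nr c1 by (simp add: field_simps)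
  next
    case 5
    have "bw_score c 4 (y(i := t)) i = 1 - (r + t) / 2 - c * ((p + t) / 2)"
      using config2_right[OF i yi all pr p0 r1 er ep, of t c] t 5 by simp
    moreover have "c * r \<le> c * t" using 5 c0 by (simp add: mult_left_mono)
    ultimately show ?thesis using base 5 pdef rdef by (simp add: field_simps)
  qed
qed

lemma reflect_dev:
  "bw_score c m (x(i := t)) i = bw_score c m ((\<lambda>j. 1 - x j)(i := 1 - t)) i"
proof -
  have "x(i := t) = (\<lambda>j. 1 - ((\<lambda>j. 1 - x j)(i := 1 - t)) j)" by auto
  then show ?thesis by (metis score_reflect)
qed

lemma exist4:
  fixes x :: "nat \<Rightarrow> real"
  assumes c0: "0 \<le> c" and c1: "c < 1"
    and np: "card {i. i < 4 \<and> x i = (1 + c) / 4} = 2" and nr: "card {i. i < 4 \<and> x i = 1 - (1 + c) / 4} = 2"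
  shows "is_NCNE c 4 x"
proof -
  define p where "p = (1 + c) / 4"
  define r where "r = 1 - (1 + c) / 4"
  have pr: "p < r" unfolding p_def r_def using c1 by (simp add: field_simps)
  have p0: "0 \<le> p" unfolding p_def using c0 by (simp add: field_simps)
  have r1: "r \<le> 1" unfolding r_def using c0 by (simp add: field_simps)
  have rp: "r = 1 - p" and pr': "p = 1 - r" unfolding p_def r_def by simp_all
  have np': "card {j. j < 4 \<and> x j = p} = 2" using np by (simp add: p_def)
  have nr': "card {j. j < 4 \<and> x j = r} = 2" using nr by (simp add: r_def)
  have sp: "card {j. j < 4 \<and> x j = p} + card {j. j < (4::nat) \<and> x j = r} = card {j. j < 4 \<and> (x j = p \<or> x j = r)}"
    using card_split[of p r 4 x] pr by simp
  have all: "\<forall>j<4. x j = p \<or> x j = r"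
    by (rule card_eq_m) (use sp np' nr' in simp)
  obtain a where a: "a < 4" "x a = p" using two_elems[of 4 "\<lambda>j. x j = p"] np' by auto
  obtain b where b: "b < 4" "x b = r" using two_elems[of 4 "\<lambda>j. x j = r"] nr' by auto
  have prof: "is_profile 4 x" unfolding is_profile_def
  proof (intro allI impI)
    fix j :: nat assume "j < 4"
    then have "x j = p \<or> x j = r" using all by blast
    then show "x j \<in> {0..1}" using p0 pr r1 by auto
  qed
  let ?x' = "\<lambda>j. 1 - x j"
  have all': "\<forall>j<4. ?x' j = p \<or> ?x' j = r" using all rp by auto
  have s1: "{j. j < 4 \<and> ?x' j = p} = {j. j < 4 \<and> x j = r}" using rp by auto
  have s2: "{j. j < 4 \<and> ?x' j = r} = {j. j < 4 \<and> x j = p}" using rp by auto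
  have np'': "card {j. j < 4 \<and> ?x' j = p} = 2" using s1 nr' by simp
  have nr'': "card {j. j < 4 \<and> ?x' j = r} = 2" using s2 np' by simp
  have equil: "\<forall>i<4. \<forall>t\<in>{0..1}. bw_score c 4 (x(i := t)) i \<le> bw_score c 4 x i"
  proof (intro allI impI ballI)
    fix i t assume i: "i < (4::nat)" and t: "t \<in> {0..(1::real)}"
    show "bw_score c 4 (x(i := t)) i \<le> bw_score c 4 x i"
    proof (cases "x i = p")
      case True
      then show ?thesis using dev4[OF c0 c1 p_def r_def all np' nr' i True] t by auto
    next
      case False
      then have "?x' i = p" using all i rp by auto
      then have "bw_score c 4 (?x'(i := 1 - t)) i \<le> bw_score c 4 ?x' i"
        using dev4[OF c0 c1 p_def r_def all' np'' nr'' i] t by auto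
      then show ?thesis by (simp only: reflect_dev[of c 4 x i t] score_reflect)
    qed
  qed
  have "x a \<noteq> x b" using a b pr by simp
  then have ne: "\<exists>i<4. \<exists>j<4. x i \<noteq> x j" using a b by blast
  show ?thesis unfolding is_NCNE_def is_equilibrium_def
    using prof equil ne by blast
qed

lemma alg32:
  fixes c p r :: real
  assumes c0: "0 \<le> c" and c1: "c < 1" and p0: "0 \<le> p" and pr: "p < r" and r1: "r \<le> 1"
    and h1: "(r - p) / 2 \<le> ((p + r) / 2 - c * (1 - (p + r) / 2)) / 3"
    and h3: "0 < p \<Longrightarrow> p - c * (1 - (p + r) / 2) \<le> ((p + r) / 2 - c * (1 - (p + r) / 2)) / 3"
  shows False
proof -
  have H1: "3*r - 3*p \<le> p + r - 2*c + c*p + c*r" using h1 by (simp add: field_simps)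
  have r0: "0 < r" using p0 pr by linarith
  have crr: "c * r < r" using c1 r0 by (metis mult_strict_right_mono mult_1)
  have cp0: "0 \<le> c * p" using c0 p0 by simp
  have cpp: "c * p \<le> p" using c1 p0 by (metis less_imp_le mult_right_mono mult_1)
  show False
  proof (cases "p = 0")
    case True
    then have "c * p = 0" by simp
    then show False using H1 crr c0 r0 True by linarith
  next
    case False
    then have pp: "0 < p" using p0 by simp
    have H3: "6*p - 6*c + 3*c*p + 3*c*r \<le> p + r - 2*c + c*p + c*r" using h3[OF pp] by (simp add: field_simps)
    show False using H1 H3 pr by linarith
  qed
qed

lemma alg5:
  fixes c p q r :: real
  assumes c0: "0 \<le> c" and c1: "c < 1" and p0: "0 \<le> p" and pq: "p < q" and qr: "q < r" and r1: "r \<le> 1"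
    and h1: "(q - p) / 2 \<le> ((p + q) / 2 - c * (1 - (p + r) / 2)) / 2"
    and h2: "(r - q) / 2 \<le> ((p + q) / 2 - c * (1 - (p + r) / 2)) / 2"
    and h5: "0 < p \<Longrightarrow> p - c * (1 - (p + r) / 2) \<le> ((p + q) / 2 - c * (1 - (p + r) / 2)) / 2"
    and g1: "((1 - q) - (1 - r)) / 2 \<le> (((1 - r) + (1 - q)) / 2 - c * (1 - ((1 - r) + (1 - p)) / 2)) / 2"
    and g2: "((1 - p) - (1 - q)) / 2 \<le> (((1 - r) + (1 - q)) / 2 - c * (1 - ((1 - r) + (1 - p)) / 2)) / 2"
    and g5: "0 < 1 - r \<Longrightarrow> (1 - r) - c * (1 - ((1 - r) + (1 - p)) / 2) \<le> (((1 - r) + (1 - q)) / 2 - c * (1 - ((1 - r) + (1 - p)) / 2)) / 2"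
  shows "p = (1 + 2 * c) / 6 \<and> q = 1 / 2 \<and> r = 1 - (1 + 2 * c) / 6"
proof -
  have H1: "2*q - 2*p \<le> p + q - 2*c + c*p + c*r" using h1 by (simp add: field_simps)
  have H2: "2*r - 2*q \<le> p + q - 2*c + c*p + c*r" using h2 by (simp add: field_simps)
  have G1: "2*r - 2*q \<le> 2 - r - q - c*p - c*r" using g1 by (simp add: field_simps)
  have G2: "2*q - 2*p \<le> 2 - r - q - c*p - c*r" using g2 by (simp add: field_simps)
  have cp0: "0 \<le> c * p" using c0 p0 by simp
  have crc: "c * r \<le> c" using c0 r1 by (metis mult_left_mono mult_1_right)
  have pp: "0 < p"
  proof (rule ccontr)
    assume "\<not> 0 < p" then have "p = 0" using p0 by simp
    then show False using H1 crc c0 pq by simp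
  qed
  have rr: "0 < 1 - r"
  proof (rule ccontr)
    assume "\<not> 0 < 1 - r" then have "r = 1" using r1 by simp
    then show False using G1 cp0 c0 qr by simp
  qed
  have H5: "4*p - 4*c + 2*c*p + 2*c*r \<le> p + q - 2*c + c*p + c*r" using h5[OF pp] by (simp add: field_simps)
  have G5: "4 - 4*r - 2*c*p - 2*c*r \<le> 2 - r - q - c*p - c*r" using g5[OF rr] by (simp add: field_simps)
  have D: "3*r = 3*p + 2 - 2*c" using H1 G1 H5 G5 by linarith
  have Q: "2*q = p + r" using H1 G1 H5 G5 H2 G2 by linarith
  have E5: "3*p - q - 2*c + c*p + c*r = 0" using H1 G1 H5 G5 by linarith
  have "c * (3*r) = c * (3*p + 2 - 2*c)" using D by simp
  then have Fcr: "3*(c*r) = 3*(c*p) + 2*c - 2*(c*c)" by (simp add: algebra_simps)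
  have "(6*p - (1 + 2*c)) * (1 + c) = 6*p + 6*(c*p) - 1 - 3*c - 2*(c*c)" by (simp add: algebra_simps)
  also have "\<dots> = 0" using E5 Fcr D Q by linarith
  finally have "6*p = 1 + 2*c" using c0 by simp
  then show ?thesis using D Q by (simp add: field_simps)
qed

lemma eq3_facts:
  fixes m :: nat and x :: "nat \<Rightarrow> real"
  assumes eq: "is_equilibrium c m x" and all: "\<forall>j<m. x j = p \<or> x j = q \<or> x j = r"
    and pq: "p < q" and qr: "q < r" and p0: "0 \<le> p" and r1: "r \<le> 1"
    and np: "card {j. j < m \<and> x j = p} \<ge> 2" and eq_: "\<exists>j<m. x j = q" and er: "\<exists>j<m. x j = r" and c0: "0 \<le> c"
  shows "(q - p) / 2 \<le> ((p + q) / 2 - c * (1 - (p + r) / 2)) / real (card {j. j < m \<and> x j = p})"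
    and "(r - q) / 2 \<le> ((p + q) / 2 - c * (1 - (p + r) / 2)) / real (card {j. j < m \<and> x j = p})"
    and "0 < p \<Longrightarrow> p - c * (1 - (p + r) / 2) \<le> ((p + q) / 2 - c * (1 - (p + r) / 2)) / real (card {j. j < m \<and> x j = p})"
proof -
  obtain a b where ab: "a < m" "b < m" "a \<noteq> b" "x a = p" "x b = p" using two_elems[OF np] by blast
  have ep: "\<exists>j<m. j \<noteq> a \<and> x j = p" using ab by auto
  note base = config3p_base[OF ab(1) ab(4) all pq qr p0 r1 er eq_ ep, of c]
  have dev: "bw_score c m (x(a := t)) a \<le> bw_score c m x a" if "t \<in> {0..1}" for t
    using eq ab that by (auto simp: is_equilibrium_def)
  have t1: "(p + q) / 2 \<in> {0..1}" using p0 pq qr r1 by auto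
  have t2: "(q + r) / 2 \<in> {0..1}" using p0 pq qr r1 by auto
  show "(q - p) / 2 \<le> ((p + q) / 2 - c * (1 - (p + r) / 2)) / real (card {j. j < m \<and> x j = p})"
    using dev[OF t1] config3p_mid1[OF ab(1) ab(4) all pq qr p0 r1 er eq_ ep, of "(p+q)/2" c] base pq by simp
  show "(r - q) / 2 \<le> ((p + q) / 2 - c * (1 - (p + r) / 2)) / real (card {j. j < m \<and> x j = p})"
    using dev[OF t2] config3p_mid2[OF ab(1) ab(4) all pq qr p0 r1 er eq_ ep, of "(q+r)/2" c] base qr by simp
  assume pp: "0 < p"
  show "p - c * (1 - (p + r) / 2) \<le> ((p + q) / 2 - c * (1 - (p + r) / 2)) / real (card {j. j < m \<and> x j = p})"
  proof (rule lim_left[OF pp, where k="(1 + c) / 2"])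
    show "0 \<le> (1 + c) / 2" using c0 by simp
    show "\<forall>t. 0 \<le> t \<and> t < p \<longrightarrow> p - c * (1 - (p + r) / 2) - (1 + c) / 2 * (p - t)
        \<le> ((p + q) / 2 - c * (1 - (p + r) / 2)) / real (card {j. j < m \<and> x j = p})"
    proof (intro allI impI)
      fix t assume t: "0 \<le> t \<and> t < p"
      have "p - c * (1 - (p + r) / 2) - (1 + c) / 2 * (p - t) = (t + p) / 2 - c * (1 - (t + r) / 2)"
        by (simp add: field_simps)
      also have "\<dots> = bw_score c m (x(a := t)) a"
        using config3p_left[OF ab(1) ab(4) all pq qr p0 r1 er eq_ ep, of t c] t by simp
      also have "\<dots> \<le> bw_score c m x a" using dev t pp pq qr r1 by auto
      finally show "p - c * (1 - (p + r) / 2) - (1 + c) / 2 * (p - t)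
        \<le> ((p + q) / 2 - c * (1 - (p + r) / 2)) / real (card {j. j < m \<and> x j = p})" using base by simp
    qed
  qed
qed

lemma no32:
  fixes m :: nat and x :: "nat \<Rightarrow> real"
  assumes eq: "is_equilibrium c m x" and all: "\<forall>j<m. x j = p \<or> x j = r"
    and pr: "p < r" and p0: "0 \<le> p" and r1: "r \<le> 1"
    and np: "card {j. j < m \<and> x j = p} = 3" and er: "\<exists>j<m. x j = r" and c0: "0 \<le> c" and c1: "c < 1"
  shows False
proof -
  have np2: "card {j. j < m \<and> x j = p} \<ge> 2" using np by simp
  note F = eq2_facts[OF eq all pr p0 r1 np2 er c0]
  show False
  proof (rule alg32[OF c0 c1 p0 pr r1])
    show "(r - p) / 2 \<le> ((p + r) / 2 - c * (1 - (p + r) / 2)) / 3" using F(1) np by simp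
    show "0 < p \<Longrightarrow> p - c * (1 - (p + r) / 2) \<le> ((p + r) / 2 - c * (1 - (p + r) / 2)) / 3"
      using F(2) np by simp
  qed
qed

lemma uniq5:
  fixes x :: "nat \<Rightarrow> real"
  assumes N: "is_NCNE c 5 x" and c0: "0 \<le> c" and c1: "c < 1"
  shows "card {i. i < 5 \<and> x i = (1 + 2 * c) / 6} = 2 \<and>
         card {i. i < 5 \<and> x i = 1 / 2} = 1 \<and>
         card {i. i < 5 \<and> x i = 1 - (1 + 2 * c) / 6} = 2"
proof -
  have eq: "is_equilibrium c 5 x" using N by (simp add: is_NCNE_def)
  have eq': "is_equilibrium c 5 (\<lambda>j. 1 - x j)" by (rule equil_reflect[OF eq])
  obtain A B where AB: "A < B" and rng: "\<forall>j<5. A \<le> x j \<and> x j \<le> B" and A0: "0 \<le> A" and B1: "B \<le> 1"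
    and nA: "card {j. j < 5 \<and> x j = A} \<ge> 2" and nB: "card {j. j < 5 \<and> x j = B} \<ge> 2"
    using extremes[OF N c0] by blast
  let ?U = "{j. j < 5 \<and> (x j = A \<or> x j = B)}"
  have sp: "card {j. j < 5 \<and> x j = A} + card {j. j < (5::nat) \<and> x j = B} = card ?U"
    using card_split[of A B 5 x] AB by simp
  have le: "card ?U \<le> 5" by (rule card_le_m)
  have eB: "\<exists>j<5. x j = B" using two_elems[OF nB] by blast
  have eA: "\<exists>j<5. x j = A" using two_elems[OF nA] by blast
  have nB': "card {j. j < 5 \<and> 1 - x j = 1 - B} \<ge> 2" using nB by simp
  have eA': "\<exists>j<5. 1 - x j = 1 - A" using eA by simp
  show ?thesis
  proof (cases "card ?U = 5")
    case True
    have all: "\<forall>j<5. x j = A \<or> x j = B" by (rule card_eq_m) (use True in simp)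
    have all': "\<forall>j<5. 1 - x j = 1 - B \<or> 1 - x j = 1 - A" using all by auto
    consider "card {j. j < 5 \<and> x j = A} = 3" | "card {j. j < 5 \<and> x j = B} = 3"
      using sp True nA nB by linarith
    then show ?thesis
    proof cases
      case 1
      then show ?thesis using no32[OF eq all AB A0 B1 1 eB c0 c1] by simp
    next
      case 2
      then have "card {j. j < 5 \<and> 1 - x j = 1 - B} = 3" by simp
      then show ?thesis using no32[OF eq' all' _ _ _ _ eA' c0 c1] AB A0 B1 by simp
    qed
  next
    case False
    then have U4: "card ?U = 4" using sp le nA nB by linarith
    have cA: "card {j. j < 5 \<and> x j = A} = 2" and cB: "card {j. j < 5 \<and> x j = B} = 2"
      using sp U4 nA nB by linarith+
    have "\<exists>k<5. \<not> (x k = A \<or> x k = B)"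
    proof (rule ccontr)
      assume "\<not> (\<exists>k<5. \<not> (x k = A \<or> x k = B))"
      then have "?U = {..<5}" by auto
      then show False using U4 by simp
    qed
    then obtain k where k: "k < 5" "x k \<noteq> A" "x k \<noteq> B" by blast
    define q where "q = x k"
    have "A \<le> x k" and "x k \<le> B" using rng k(1) by blast+
    then have Aq: "A < q" and qB: "q < B" using k(2,3) unfolding q_def by (auto simp: less_le)
    have only: "\<forall>j<5. j \<notin> ?U \<longrightarrow> j = k"
    proof (intro allI impI)
      fix j :: nat assume j: "j < 5" "j \<notin> ?U"
      show "j = k"
      proof (rule ccontr)
        assume jk: "j \<noteq> k"
        have kU: "k \<notin> ?U" using k by auto
        have "insert j (insert k ?U) \<subseteq> {..<5}" using j k by auto
        then have "card (insert j (insert k ?U)) \<le> card {..<(5::nat)}" by (rule card_mono[rotated]) simp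
        moreover have "card (insert j (insert k ?U)) = card ?U + 2"
          using j kU jk by (simp add: finite_Collect_conjI)
        ultimately show False using U4 by simp
      qed
    qed
    have all3: "\<forall>j<5. x j = A \<or> x j = q \<or> x j = B"
    proof (intro allI impI)
      fix j :: nat assume j: "j < 5"
      show "x j = A \<or> x j = q \<or> x j = B"
      proof (cases "j \<in> ?U")
        case True then show ?thesis by blast
      next
        case False then have "j = k" using only j by blast
        then show ?thesis unfolding q_def by blast
      qed
    qed
    have cq: "{j. j < 5 \<and> x j = q} = {k}"
    proof (intro set_eqI iffI)
      fix j assume j: "j \<in> {j. j < 5 \<and> x j = q}"
      then have "j \<notin> ?U" using Aq qB by auto
      then show "j \<in> {k}" using only j by blast
    next
      fix j assume "j \<in> {k}"
      then show "j \<in> {j. j < 5 \<and> x j = q}" using k(1) unfolding q_def by simp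
    qed
    have eq_: "\<exists>j<5. x j = q" using k unfolding q_def by auto
    note F = eq3_facts[OF eq all3 Aq qB A0 B1 nA eq_ eB c0]
    have all3': "\<forall>j<5. 1 - x j = 1 - B \<or> 1 - x j = 1 - q \<or> 1 - x j = 1 - A" using all3 by auto
    have eq_': "\<exists>j<5. 1 - x j = 1 - q" using eq_ by simp
    note F' = eq3_facts[OF eq' all3' _ _ _ _ nB' eq_' eA' c0]
    have "A = (1 + 2 * c) / 6 \<and> q = 1 / 2 \<and> B = 1 - (1 + 2 * c) / 6"
    proof (rule alg5[OF c0 c1 A0 Aq qB B1])
      show "(q - A) / 2 \<le> ((A + q) / 2 - c * (1 - (A + B) / 2)) / 2" using F(1) cA by simp
      show "(B - q) / 2 \<le> ((A + q) / 2 - c * (1 - (A + B) / 2)) / 2" using F(2) cA by simp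
      show "0 < A \<Longrightarrow> A - c * (1 - (A + B) / 2) \<le> ((A + q) / 2 - c * (1 - (A + B) / 2)) / 2"
        using F(3) cA by simp
      show "((1 - q) - (1 - B)) / 2 \<le> (((1 - B) + (1 - q)) / 2 - c * (1 - ((1 - B) + (1 - A)) / 2)) / 2"
        using F'(1) Aq qB A0 B1 cB by simp
      show "((1 - A) - (1 - q)) / 2 \<le> (((1 - B) + (1 - q)) / 2 - c * (1 - ((1 - B) + (1 - A)) / 2)) / 2"
        using F'(2) Aq qB A0 B1 cB by simp
      show "0 < 1 - B \<Longrightarrow> (1 - B) - c * (1 - ((1 - B) + (1 - A)) / 2) \<le> (((1 - B) + (1 - q)) / 2 - c * (1 - ((1 - B) + (1 - A)) / 2)) / 2"
        using F'(3) Aq qB A0 B1 cB by simp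
    qed
    then have hA: "A = (1 + 2 * c) / 6" and hq: "q = 1 / 2" and hB: "B = 1 - (1 + 2 * c) / 6" by auto
    have cq1: "card {j. j < 5 \<and> x j = q} = 1" using cq by simp
    show ?thesis
      apply (subst hB[symmetric])
      apply (subst hA[symmetric])
      apply (subst hq[symmetric])
      using cA cB cq1 by simp
  qed
qed

lemma dev5p:
  fixes y :: "nat \<Rightarrow> real"
  assumes c0: "0 \<le> c" and c1: "c < 1" and pdef: "p = (1 + 2 * c) / 6" and qdef: "q = 1 / 2"
    and rdef: "r = 1 - (1 + 2 * c) / 6"
    and all: "\<forall>j<5. y j = p \<or> y j = q \<or> y j = r"
    and np: "card {j. j < 5 \<and> y j = p} = 2" and nq: "card {j. j < 5 \<and> y j = q} = 1"
    and nr: "card {j. j < 5 \<and> y j = r} = 2"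
    and i: "i < 5" and yi: "y i = p" and t: "0 \<le> t" "t \<le> 1"
  shows "bw_score c 5 (y(i := t)) i \<le> bw_score c 5 y i"
proof -
  have pq: "p < q" unfolding pdef qdef using c1 by (simp add: field_simps)
  have qr: "q < r" unfolding qdef rdef using c1 by (simp add: field_simps)
  have p0: "0 \<le> p" unfolding pdef using c0 by (simp add: field_simps)
  have r1: "r \<le> 1" unfolding rdef using c0 by (simp add: field_simps)
  have s1: "p + r = 1" using pdef rdef by simp
  obtain a b where ab: "a < 5" "b < 5" "a \<noteq> b" "y a = p" "y b = p" using two_elems[of 5 "\<lambda>j. y j = p"] np by auto
  have ep: "\<exists>j<5. j \<noteq> i \<and> y j = p" using ab by (metis)
  have er: "\<exists>j<5. y j = r" using two_elems[of 5 "\<lambda>j. y j = r"] nr by auto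
  have eq_: "\<exists>j<5. y j = q" using nq by (metis (mono_tags, lifting) card.empty empty_Collect_eq zero_neq_one)
  note C = config3p[OF i yi all pq qr p0 r1 er eq_ ep]
  have base: "bw_score c 5 y i = (1 - c) / 6"
    using C(1)[of c] np pdef qdef rdef by (simp add: field_simps)
  consider "t < p" | "t = p" | "p < t \<and> t < q" | "t = q" | "q < t \<and> t < r" | "t = r" | "r < t"
    by linarith
  then show ?thesis
  proof cases
    case 1
    have "bw_score c 5 (y(i := t)) i = (t + p) / 2 - c * (1 - (t + r) / 2)"
      using C(2)[of t c] t 1 by simp
    moreover have "c * t \<le> c * p" using 1 c0 by (simp add: mult_left_mono)
    ultimately show ?thesis using base 1 pdef rdef by (simp add: field_simps)
  next
    case 2
    then have "y(i := t) = y" using yi by auto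
    then show ?thesis by simp
  next
    case 3
    have "bw_score c 5 (y(i := t)) i = (q - p) / 2" using C(3)[of t c] 3 by simp
    then show ?thesis using base pdef qdef by (simp add: field_simps)
  next
    case 4
    have "bw_score c 5 (y(i := t)) i = ((r - p) / 2) / real (card {j. j < 5 \<and> y j = q} + 1)"
      using C(4)[of c] 4 by simp
    then show ?thesis using base pdef rdef nq by (simp add: field_simps)
  next
    case 5
    have "bw_score c 5 (y(i := t)) i = (r - q) / 2" using C(5)[of t c] 5 by simp
    then show ?thesis using base qdef rdef by (simp add: field_simps)
  next
    case 6
    have "bw_score c 5 (y(i := t)) i = ((1 - (q + r) / 2) - c * ((p + r) / 2)) / real (card {j. j < 5 \<and> y j = r} + 1)"
      using C(6)[of c] 6 by simp
    moreover have "real (card {j. j < 5 \<and> y j = r} + 1) = 3" using nr by simp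
    ultimately have "bw_score c 5 (y(i := t)) i = ((1 - (q + r) / 2) - c * ((p + r) / 2)) / 3" by simp
    also have "\<dots> = (1 - c) / 9" by (simp only: s1) (simp add: qdef rdef field_simps)
    also have "\<dots> \<le> (1 - c) / 6" using c1 by (simp add: field_simps)
    finally show ?thesis using base by simp
  next
    case 7
    have "bw_score c 5 (y(i := t)) i = 1 - (r + t) / 2 - c * ((p + t) / 2)"
      using C(7)[of t c] t 7 by simp
    moreover have "c * r \<le> c * t" using 7 c0 by (simp add: mult_left_mono)
    ultimately show ?thesis using base 7 pdef rdef by (simp add: field_simps)
  qed
qed

lemma dev5q:
  fixes y :: "nat \<Rightarrow> real"
  assumes c0: "0 \<le> c" and c1: "c < 1" and pdef: "p = (1 + 2 * c) / 6" and qdef: "q = 1 / 2"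
    and rdef: "r = 1 - (1 + 2 * c) / 6"
    and all: "\<forall>j<5. y j = p \<or> y j = q \<or> y j = r"
    and np: "card {j. j < 5 \<and> y j = p} = 2" and nq: "card {j. j < 5 \<and> y j = q} = 1"
    and nr: "card {j. j < 5 \<and> y j = r} = 2"
    and i: "i < 5" and yi: "y i = q" and t: "0 \<le> t" "t < r"
  shows "bw_score c 5 (y(i := t)) i \<le> bw_score c 5 y i"
proof -
  have pq: "p < q" unfolding pdef qdef using c1 by (simp add: field_simps)
  have qr: "q < r" unfolding qdef rdef using c1 by (simp add: field_simps)
  have p0: "0 \<le> p" unfolding pdef using c0 by (simp add: field_simps)
  have r1: "r \<le> 1" unfolding rdef using c0 by (simp add: field_simps)
  have s1: "p + r = 1" using pdef rdef by simp
  have er: "\<exists>j<5. y j = r" using two_elems[of 5 "\<lambda>j. y j = r"] nr by auto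
  have ep: "\<exists>j<5. y j = p" using two_elems[of 5 "\<lambda>j. y j = p"] np by auto
  have single: "{j. j < 5 \<and> y j = q} = {i}"
  proof -
    obtain k where "{j. j < 5 \<and> y j = q} = {k}" using nq by (metis card_1_singletonE)
    moreover have "i \<in> {j. j < 5 \<and> y j = q}" using i yi by simp
    ultimately show ?thesis by auto
  qed
  have oth: "\<forall>j<5. j \<noteq> i \<longrightarrow> y j = p \<or> y j = r"
  proof (intro allI impI)
    fix j :: nat assume j: "j < 5" "j \<noteq> i"
    then have "y j \<noteq> q" using single by auto
    then show "y j = p \<or> y j = r" using all j by blast
  qed
  note C = config3q[OF i yi oth pq qr p0 r1 er ep]
  have yq: "y(i := q) = y" using yi by auto
  have base: "bw_score c 5 y i = (r - p) / 2"
    using C(2)[of q c] pq qr yq by simp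
  consider "t < p" | "t = p" | "p < t" by linarith
  then show ?thesis
  proof cases
    case 1
    have EQ: "bw_score c 5 (y(i := t)) i = (t + p) / 2 - c * (1 - (t + r) / 2)"
      using C(1)[of t c] t 1 by simp
    have "c * t \<le> c * p" using 1 c0 by (simp add: mult_left_mono)
    then have "(t + p) / 2 - c * (1 - (t + r) / 2) \<le> p - c * (1 - (p + r) / 2)"
      using 1 by (simp add: field_simps)
    also have "\<dots> = p - c / 2" by (simp only: s1) simp
    also have "\<dots> \<le> (r - p) / 2" using c1 unfolding pdef rdef by (simp add: field_simps)
    finally have F: "(t + p) / 2 - c * (1 - (t + r) / 2) \<le> (r - p) / 2" .
    show ?thesis unfolding EQ base by (rule F)
  next
    case 2
    have "bw_score c 5 (y(i := t)) i = ((p + r) / 2 - c * (1 - (p + r) / 2)) / real (card {j. j < 5 \<and> y j = p} + 1)"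
      using C(3)[of c] 2 by simp
    then show ?thesis using base s1 np c0 c1 pdef rdef by (simp add: field_simps)
  next
    case 3
    have "bw_score c 5 (y(i := t)) i = (r - p) / 2" using C(2)[of t c] 3 t by simp
    then show ?thesis using base by simp
  qed
qed

lemma card_split_P:
  fixes m :: nat
  assumes "\<forall>j. \<not> (P j \<and> Q j)"
  shows "card {j. j < m \<and> P j} + card {j. j < m \<and> Q j} = card {j. j < m \<and> (P j \<or> Q j)}"
proof -
  have "{j. j < m \<and> (P j \<or> Q j)} = {j. j < m \<and> P j} \<union> {j. j < m \<and> Q j}" by auto
  moreover have "{j. j < m \<and> P j} \<inter> {j. j < m \<and> Q j} = {}" using assms by auto
  ultimately show ?thesis by (simp add: card_Un_disjoint finite_Collect_conjI)
qed

lemma exist5: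
  fixes x :: "nat \<Rightarrow> real"
  assumes c0: "0 \<le> c" and c1: "c < 1"
    and np: "card {i. i < 5 \<and> x i = (1 + 2 * c) / 6} = 2" and nq: "card {i. i < 5 \<and> x i = 1 / 2} = 1"
    and nr: "card {i. i < 5 \<and> x i = 1 - (1 + 2 * c) / 6} = 2"
  shows "is_NCNE c 5 x"
proof -
  define p where "p = (1 + 2 * c) / 6"
  define q where "q = (1 / 2 :: real)"
  define r where "r = 1 - (1 + 2 * c) / 6"
  have pq: "p < q" unfolding p_def q_def using c1 by (simp add: field_simps)
  have qr: "q < r" unfolding q_def r_def using c1 by (simp add: field_simps)
  have p0: "0 \<le> p" unfolding p_def using c0 by (simp add: field_simps)
  have r1: "r \<le> 1" unfolding r_def using c0 by (simp add: field_simps)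
  have rp: "r = 1 - p" unfolding p_def r_def by simp
  have qq: "1 - q = q" unfolding q_def by simp
  have np': "card {j. j < 5 \<and> x j = p} = 2" using np by (simp add: p_def)
  have nq': "card {j. j < 5 \<and> x j = q} = 1" using nq by (simp add: q_def)
  have nr': "card {j. j < 5 \<and> x j = r} = 2" using nr by (simp add: r_def)
  have s1: "card {j. j < 5 \<and> x j = p} + card {j. j < (5::nat) \<and> x j = q} = card {j. j < 5 \<and> (x j = p \<or> x j = q)}"
    by (rule card_split_P) (use pq in auto)
  have s2: "card {j. j < 5 \<and> (x j = p \<or> x j = q)} + card {j. j < (5::nat) \<and> x j = r} = card {j. j < 5 \<and> ((x j = p \<or> x j = q) \<or> x j = r)}"
    by (rule card_split_P) (use pq qr in auto)
  have all0: "\<forall>j<5. (x j = p \<or> x j = q) \<or> x j = r"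
    by (rule card_eq_m) (use s1 s2 np' nq' nr' in simp)
  then have all: "\<forall>j<5. x j = p \<or> x j = q \<or> x j = r" by blast
  obtain a where a: "a < 5" "x a = p" using two_elems[of 5 "\<lambda>j. x j = p"] np' by auto
  obtain b where b: "b < 5" "x b = r" using two_elems[of 5 "\<lambda>j. x j = r"] nr' by auto
  have prof: "is_profile 5 x" unfolding is_profile_def
  proof (intro allI impI)
    fix j :: nat assume "j < 5"
    then have "x j = p \<or> x j = q \<or> x j = r" using all by blast
    then show "x j \<in> {0..1}" using p0 pq qr r1 by auto
  qed
  let ?x' = "\<lambda>j. 1 - x j"
  have all': "\<forall>j<5. ?x' j = p \<or> ?x' j = q \<or> ?x' j = r"
  proof (intro allI impI)
    fix j :: nat assume "j < 5"
    then have "x j = p \<or> x j = q \<or> x j = r" using all by blast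
    then show "?x' j = p \<or> ?x' j = q \<or> ?x' j = r" using rp qq by auto
  qed
  have e1: "{j. j < 5 \<and> ?x' j = p} = {j. j < 5 \<and> x j = r}" using rp by auto
  have e2: "{j. j < 5 \<and> ?x' j = q} = {j. j < 5 \<and> x j = q}" using qq by auto
  have e3: "{j. j < 5 \<and> ?x' j = r} = {j. j < 5 \<and> x j = p}" using rp by auto
  have np'': "card {j. j < 5 \<and> ?x' j = p} = 2" using e1 nr' by simp
  have nq'': "card {j. j < 5 \<and> ?x' j = q} = 1" using e2 nq' by simp
  have nr'': "card {j. j < 5 \<and> ?x' j = r} = 2" using e3 np' by simp
  note D = dev5p[OF c0 c1 p_def q_def r_def all np' nq' nr']
  note D' = dev5p[OF c0 c1 p_def q_def r_def all' np'' nq'' nr'']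
  note Q = dev5q[OF c0 c1 p_def q_def r_def all np' nq' nr']
  note Q' = dev5q[OF c0 c1 p_def q_def r_def all' np'' nq'' nr'']
  have equil: "\<forall>i<5. \<forall>t\<in>{0..1}. bw_score c 5 (x(i := t)) i \<le> bw_score c 5 x i"
  proof (intro allI impI ballI)
    fix i t assume i: "i < (5::nat)" and t: "t \<in> {0..(1::real)}"
    have xi: "x i = p \<or> x i = q \<or> x i = r" using all i by blast
    show "bw_score c 5 (x(i := t)) i \<le> bw_score c 5 x i"
    proof (cases "x i = p")
      case True
      then show ?thesis using D[OF i True] t by auto
    next
      case F1: False
      show ?thesis
      proof (cases "x i = r")
        case True
        then have "?x' i = p" using rp by simp
        then have "bw_score c 5 (?x'(i := 1 - t)) i \<le> bw_score c 5 ?x' i"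
          using D'[OF i] t by auto
        then show ?thesis by (simp only: reflect_dev[of c 5 x i t] score_reflect)
      next
        case False
        then have xq: "x i = q" using xi F1 by blast
        show ?thesis
        proof (cases "t < r")
          case True
          then show ?thesis using Q[OF i xq] t by auto
        next
          case False
          have "?x' i = q" using xq qq by simp
          moreover have "1 - t < r" using False rp pq qr by linarith
          ultimately have "bw_score c 5 (?x'(i := 1 - t)) i \<le> bw_score c 5 ?x' i"
            using Q'[OF i] t by auto
          then show ?thesis by (simp only: reflect_dev[of c 5 x i t] score_reflect)
        qed
      qed
    qed
  qed
  have "x a \<noteq> x b" using a b pq qr by simp
  then have ne: "\<exists>i<5. \<exists>j<5. x i \<noteq> x j" using a b by blast
  show ?thesis unfolding is_NCNE_def is_equilibrium_def
    using prof equil ne by blast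
qed

theorem corollary3:
  fixes c :: real
  assumes "0 \<le> c" and "c < 1"
  shows "(\<forall>x. is_NCNE c 4 x \<longleftrightarrow>
            (card {i. i < 4 \<and> x i = (1 + c) / 4} = 2 \<and>
             card {i. i < 4 \<and> x i = 1 - (1 + c) / 4} = 2))
       \<and> (\<forall>x. is_NCNE c 5 x \<longleftrightarrow>
            (card {i. i < 5 \<and> x i = (1 + 2 * c) / 6} = 2 \<and>
             card {i. i < 5 \<and> x i = 1 / 2} = 1 \<and>
             card {i. i < 5 \<and> x i = 1 - (1 + 2 * c) / 6} = 2))"
  using uniq4[OF _ assms] exist4[OF assms] uniq5[OF _ assms] exist5[OF assms] by blast


end
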